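(* Let $f,f':(\mathbb{R}^2,0)\to PT^*\mathbb{R}^2$ be completely integrable equations with independent first integrals $\mu,\mu':(\mathbb{R}^2,0)\to(\mathbb{R},0)$ respectively, and assume that $\pi\circ f$ and $\pi\circ f':(\mathbb{R}^2,0)\to(\mathbb{R}^2,0)$ have nowhere dense sets of singular points. Then $f$ and $f'$ are equivalent under the group of point transformations if and only if the integral diagrams $(\mu,\pi\circ f)$ and $(\mu',\pi\circ f')$ are equivalent.
   Context: $PT^*\mathbb{R}^2$ is the projectivized cotangent bundle (manifold of contact elements) of the plane, with projection $\pi: PT^*\mathbb{R}^2\to\mathbb{R}^2$ and its canonical contact structure, locally given in coordinates $(x,y,p)$ by $\theta = dy - p\,dx$. An equation germ $f:(\mathbb{R}^2,0)\to PT^*\mathbb{R}^2$ is completely integrable if there exists a submersion germ $\mu:(\mathbb{R}^2,0)\to\mathbb{R}$ (an independent first integral) with $d\mu\wedge f^*\theta = 0$. For a map germ $g$ and submersion germ $\mu$, the pair $(\mu,g)$ with $g=\pi\circ f$ is the induced integral diagram. Two integral diagrams $(\mu,g),(\mu',g')$ are equivalent if there exist diffeomorphism germs $\kappa$ of $(\mathbb{R},0)$ and $\psi,\phi$ of $(\mathbb{R}^2,0)$ with $\kappa\circ\mu=\mu'\circ\psi$ and $\phi\circ g = g'\circ\psi$. Two equations $f,f'$ are equivalent under the group of point transformations if there is a diffeomorphism germ $\phi:(\mathbb{R}^2,\pi(f(0)))\to(\mathbb{R}^2,\pi(f'(0)))$ whose canonical lift $\hat\phi:(PT^*\mathbb{R}^2,f(0))\to(PT^*\mathbb{R}^2,f'(0))$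 (the induced map on contact elements) satisfies $\hat\phi\circ f = f'\circ\psi$ for some diffeomorphism germ $\psi$ of $(\mathbb{R}^2,0)$. *)

theory Defs
  imports "HOL-Analysis.Analysis"
begin

coinductive smooth_on :: "'a::real_normed_vector set \<Rightarrow> ('a \<Rightarrow> 'b::real_normed_vector) \<Rightarrow> bool"
  for S :: "'a set" where
  "f differentiable_on S \<Longrightarrow> (\<And>v. smooth_on S (\<lambda>x. frechet_derivative f (at x) v))
    \<Longrightarrow> smooth_on S f"

definition smooth_germ :: "'a::real_normed_vector \<Rightarrow> ('a \<Rightarrow> 'b::real_normed_vector) \<Rightarrow> bool" where
  "smooth_germ a f \<longleftrightarrow> (\<exists>U. open U \<and> a \<in> U \<and> smooth_on U f)"

definition diffeo_germ :: "'a::real_normed_vector \<Rightarrow> 'a \<Rightarrow> ('a \<Rightarrow> 'a) \<Rightarrow> bool" where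
  "diffeo_germ a b \<phi> \<longleftrightarrow> \<phi> a = b \<and>
     (\<exists>U. open U \<and> a \<in> U \<and> open (\<phi> ` U) \<and> inj_on \<phi> U \<and>
          smooth_on U \<phi> \<and> smooth_on (\<phi> ` U) (inv_into U \<phi>))"

definition submersion_germ :: "'a::real_normed_vector \<Rightarrow> ('a \<Rightarrow> 'b::real_normed_vector) \<Rightarrow> bool" where
  "submersion_germ a \<mu> \<longleftrightarrow> smooth_germ a \<mu> \<and> surj (frechet_derivative \<mu> (at a))"

definition sing_set :: "(real^2 \<Rightarrow> real^2) \<Rightarrow> (real^2) set" where
  "sing_set g = {x. \<not> surj (frechet_derivative g (at x))}"

definition nowhere_dense_sing :: "(real^2 \<Rightarrow> real^2) \<Rightarrow> bool" where
  "nowhere_dense_sing g \<longleftrightarrow>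
     (\<exists>U. open U \<and> (0::real^2) \<in> U \<and> smooth_on U g \<and> interior (closure (U \<inter> sing_set g)) = {})"

text \<open>An equation germ f : (R^2,0) -> PT*R^2 is represented by a pair (g, \<omega>):
  g = \<pi> \<circ> f and \<omega> u a nonvanishing covector (identified with a vector via the inner
  product) whose kernel is the contact element f u.  In the chart (x,y,p) of the paper
  \<omega> = (-p, 1), i.e. the contact element is ker (dy - p dx).\<close>
definition equation_germ :: "(real^2 \<Rightarrow> real^2) \<Rightarrow> (real^2 \<Rightarrow> real^2) \<Rightarrow> bool" where
  "equation_germ g \<omega> \<longleftrightarrow>
     (\<exists>U. open U \<and> (0::real^2) \<in> U \<and> smooth_on U g \<and> smooth_on U \<omega> \<and> (\<forall>u\<in>U. \<omega> u \<noteq> 0))"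

text \<open>Pull-back f^*\<theta> of the contact form (up to a nonvanishing factor).\<close>
definition pullback_contact :: "(real^2 \<Rightarrow> real^2) \<Rightarrow> (real^2 \<Rightarrow> real^2) \<Rightarrow> real^2 \<Rightarrow> real^2 \<Rightarrow> real" where
  "pullback_contact g \<omega> u h = \<omega> u \<bullet> frechet_derivative g (at u) h"

definition wedge2 :: "(real^2 \<Rightarrow> real^2 \<Rightarrow> real) \<Rightarrow> (real^2 \<Rightarrow> real^2 \<Rightarrow> real) \<Rightarrow> real^2 \<Rightarrow> real" where
  "wedge2 \<alpha> \<beta> u = \<alpha> u (axis 1 1) * \<beta> u (axis 2 1) - \<alpha> u (axis 2 1) * \<beta> u (axis 1 1)"

definition first_integral :: "(real^2 \<Rightarrow> real) \<Rightarrow> (real^2 \<Rightarrow> real^2) \<Rightarrow> (real^2 \<Rightarrow> real^2) \<Rightarrow> bool" where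
  "first_integral \<mu> g \<omega> \<longleftrightarrow> submersion_germ 0 \<mu> \<and>
     (\<forall>\<^sub>F u in nhds 0. wedge2 (\<lambda>u. frechet_derivative \<mu> (at u)) (pullback_contact g \<omega>) u = 0)"

text \<open>Equivalence under point transformations: the canonical lift of \<phi> sends the
  contact element ker \<omega> at q to D\<phi>(q)(ker \<omega>) at \<phi> q.\<close>
definition point_equivalent ::
  "(real^2 \<Rightarrow> real^2) \<Rightarrow> (real^2 \<Rightarrow> real^2) \<Rightarrow> (real^2 \<Rightarrow> real^2) \<Rightarrow> (real^2 \<Rightarrow> real^2) \<Rightarrow> bool" where
  "point_equivalent g \<omega> g' \<omega>' \<longleftrightarrow>
     (\<exists>\<phi> \<psi>. diffeo_germ (g 0) (g' 0) \<phi> \<and> diffeo_germ 0 0 \<psi> \<and>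
        (\<forall>\<^sub>F u in nhds 0. \<phi> (g u) = g' (\<psi> u) \<and>
            frechet_derivative \<phi> (at (g u)) ` {h. \<omega> u \<bullet> h = 0} = {h. \<omega>' (\<psi> u) \<bullet> h = 0}))"

definition integral_diagram_equiv ::
  "(real^2 \<Rightarrow> real) \<Rightarrow> (real^2 \<Rightarrow> real^2) \<Rightarrow> (real^2 \<Rightarrow> real) \<Rightarrow> (real^2 \<Rightarrow> real^2) \<Rightarrow> bool" where
  "integral_diagram_equiv \<mu> g \<mu>' g' \<longleftrightarrow>
     (\<exists>\<kappa> \<psi> \<phi>. diffeo_germ (\<mu> 0) (\<mu>' 0) \<kappa> \<and> diffeo_germ 0 0 \<psi> \<and> diffeo_germ (g 0) (g' 0) \<phi> \<and>
        (\<forall>\<^sub>F u in nhds 0. \<kappa> (\<mu> u) = \<mu>' (\<psi> u) \<and> \<phi> (g u) = g' (\<psi> u)))"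

end

theory Submission
  imports Defs
begin

lemma smooth_on_diff: "smooth_on S f \<Longrightarrow> f differentiable_on S"
  by (erule smooth_on.cases) auto

lemma smooth_on_deriv: "smooth_on S f \<Longrightarrow> smooth_on S (\<lambda>x. frechet_derivative f (at x) v)"
  by (erule smooth_on.cases) auto

lemma smooth_on_at: "smooth_on S f \<Longrightarrow> open S \<Longrightarrow> x \<in> S \<Longrightarrow> f differentiable at x"
  using smooth_on_diff differentiable_on_eq_differentiable_at by blast

lemma smooth_has_deriv: "smooth_on S f \<Longrightarrow> open S \<Longrightarrow> x \<in> S \<Longrightarrow>
   (f has_derivative frechet_derivative f (at x)) (at x)"
  using smooth_on_at frechet_derivative_works by blast

lemma smooth_cont: "smooth_on S f \<Longrightarrow> continuous_on S f"
  using smooth_on_diff differentiable_imp_continuous_on by blast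

lemma smooth_deriv_cont: "smooth_on S f \<Longrightarrow> continuous_on S (\<lambda>x. frechet_derivative f (at x) v)"
  using smooth_cont smooth_on_deriv by blast

lemma diff_on_cong_open:
  assumes S: "open S" and f: "f differentiable_on S" and e: "\<forall>x\<in>S. g x = f x"
  shows "g differentiable_on S"
  unfolding differentiable_on_eq_differentiable_at[OF S]
proof
  fix x assume x: "x \<in> S"
  then obtain f' where "(f has_derivative f') (at x)"
    using f S differentiable_on_eq_differentiable_at differentiable_def by blast
  then have "(g has_derivative f') (at x)"
    using has_derivative_transform_within_open[OF _ S x] e by metis
  then show "g differentiable at x" using differentiableI by blast
qed

lemma smooth_coind:
  assumes S: "open S" and X0: "X f0" and ag: "\<forall>x\<in>S. f x = f0 x"
    and D: "\<And>h. X h \<Longrightarrow> h differentiable_on S"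
    and DD: "\<And>h v. X h \<Longrightarrow> \<exists>h'. X h' \<and> (\<forall>x\<in>S. frechet_derivative h (at x) v = h' x)"
  shows "smooth_on S f"
proof -
  define Y where "Y = (\<lambda>h. \<exists>h0. X h0 \<and> (\<forall>x\<in>S. h x = h0 x))"
  have "Y f" using X0 ag Y_def by blast
  then show ?thesis
  proof (rule smooth_on.coinduct[where X=Y])
    fix h assume "Y h"
    then obtain h0 where h0: "X h0" "\<forall>x\<in>S. h x = h0 x" unfolding Y_def by blast
    have dh0: "h0 differentiable_on S" using D h0 by blast
    have dh: "h differentiable_on S"
      using diff_on_cong_open[OF S dh0] h0(2) by blast
    have "Y (\<lambda>x. frechet_derivative h (at x) v)" for v
    proof -
      obtain h' where h': "X h'" "\<forall>x\<in>S. frechet_derivative h0 (at x) v = h' x" using DD h0 by blast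
      have "\<forall>x\<in>S. frechet_derivative h (at x) v = h' x"
      proof
        fix x assume x: "x \<in> S"
        have "h0 differentiable at x" using dh0 S x differentiable_on_eq_differentiable_at by blast
        then have "frechet_derivative h0 (at x) = frechet_derivative h (at x)"
          using frechet_derivative_transform_within_open[OF _ S x] h0(2) by metis
        then show "frechet_derivative h (at x) v = h' x" using h' x by metis
      qed
      then show ?thesis unfolding Y_def using h' by blast
    qed
    then show "\<exists>f. h = f \<and> f differentiable_on S \<and> (\<forall>v. Y (\<lambda>x. frechet_derivative f (at x) v) \<or> smooth_on S (\<lambda>x. frechet_derivative f (at x) v))" using dh by blast
  qed
qed

lemma smooth_on_subset:
  assumes "smooth_on S f" "T \<subseteq> S" "open T" shows "smooth_on T f"
  by (rule smooth_on.coinduct[where X="smooth_on S", OF assms(1)])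
    (use smooth_on_deriv smooth_on_diff differentiable_on_subset assms(2) in blast)

lemma smooth_on_cong:
  assumes "smooth_on S f" "open S" "\<forall>x\<in>S. g x = f x" shows "smooth_on S g"
  by (rule smooth_coind[where X="smooth_on S", OF assms(2,1,3)])
    (auto intro: smooth_on_diff smooth_on_deriv)

lemma smooth_const: "open S \<Longrightarrow> smooth_on S (\<lambda>x. c::'b::real_normed_vector)"
  by (rule smooth_coind[where X="\<lambda>h. \<exists>c. h = (\<lambda>x. c)" and f0="\<lambda>x. c"]) auto

lemma smooth_ident:
  fixes S :: "'a::real_normed_vector set"
  assumes "open S" shows "smooth_on S (\<lambda>x. x)"
proof (rule smooth_coind[where X="\<lambda>h. h = (\<lambda>x. x) \<or> (\<exists>c. h = (\<lambda>x. c))" and f0="\<lambda>x. x", OF assms])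
  fix h :: "'a \<Rightarrow> 'a" and v assume "h = (\<lambda>x. x) \<or> (\<exists>c. h = (\<lambda>x. c))"
  then show "\<exists>h'. (h' = (\<lambda>x. x) \<or> (\<exists>c. h' = (\<lambda>x. c))) \<and> (\<forall>x\<in>S. frechet_derivative h (at x) v = h' x)"
  proof
    assume "h = (\<lambda>x. x)" then show ?thesis by (intro exI[of _ "\<lambda>x. v"]) auto
  next
    assume "\<exists>c. h = (\<lambda>x. c)" then show ?thesis by (intro exI[of _ "\<lambda>x. 0"]) auto
  qed
qed auto

lemma smooth_linear_comp:
  assumes "open S" "bounded_linear l" "smooth_on S f"
  shows "smooth_on S (\<lambda>x. l (f x))"
proof (rule smooth_coind[where X="\<lambda>h. \<exists>f. smooth_on S f \<and> h = (\<lambda>x. l (f x))", OF assms(1)])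
  show "\<exists>f'. smooth_on S f' \<and> (\<lambda>x. l (f x)) = (\<lambda>x. l (f' x))" using assms by blast
next
  fix h assume "\<exists>f. smooth_on S f \<and> h = (\<lambda>x. l (f x))"
  then obtain f where f: "smooth_on S f" "h = (\<lambda>x. l (f x))" by blast
  show "h differentiable_on S" unfolding f(2) differentiable_on_eq_differentiable_at[OF assms(1)]
    using bounded_linear.has_derivative[OF assms(2) smooth_has_deriv[OF f(1) assms(1)]] differentiableI by blast
next
  fix h v assume "\<exists>f. smooth_on S f \<and> h = (\<lambda>x. l (f x))"
  then obtain f where f: "smooth_on S f" "h = (\<lambda>x. l (f x))" by blast
  have "\<forall>x\<in>S. frechet_derivative h (at x) v = l (frechet_derivative f (at x) v)"
  proof
    fix x assume x: "x \<in> S"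
    have "(h has_derivative (\<lambda>w. l (frechet_derivative f (at x) w))) (at x)"
      unfolding f(2) using bounded_linear.has_derivative[OF assms(2) smooth_has_deriv[OF f(1) assms(1) x]] .
    then show "frechet_derivative h (at x) v = l (frechet_derivative f (at x) v)"
      using frechet_derivative_at by metis
  qed
  then show "\<exists>h'. (\<exists>f. smooth_on S f \<and> h' = (\<lambda>x. l (f x))) \<and> (\<forall>x\<in>S. frechet_derivative h (at x) v = h' x)"
    using smooth_on_deriv[OF f(1)] by blast
qed simp

lemma smooth_bl: "open S \<Longrightarrow> bounded_linear l \<Longrightarrow> smooth_on S l"
  using smooth_linear_comp[OF _ _ smooth_ident, of S l] by simp

inductive psum :: "'a::real_normed_vector set \<Rightarrow> ('a \<Rightarrow> 'c::real_normed_vector) \<Rightarrow> bool" for S where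
  psum0: "psum S (\<lambda>x. 0)"
| psum1: "smooth_on S (a :: 'a \<Rightarrow> real) \<Longrightarrow> smooth_on S k \<Longrightarrow> psum S (\<lambda>x. a x *\<^sub>R k x)"
| psum2: "psum S h1 \<Longrightarrow> psum S h2 \<Longrightarrow> psum S (\<lambda>x. h1 x + h2 x)"

lemma psum_deriv:
  assumes S: "open S" and "psum S h"
  shows "h differentiable_on S \<and> (\<forall>v. \<exists>h'. psum S h' \<and> (\<forall>x\<in>S. frechet_derivative h (at x) v = h' x))"
  using assms(2)
proof induction
  case psum0
  then show ?case by (auto intro!: exI[of _ "\<lambda>x. 0"] psum.psum0)
next
  case (psum1 a k)
  have hd: "((\<lambda>x. a x *\<^sub>R k x) has_derivative
      (\<lambda>w. a x *\<^sub>R frechet_derivative k (at x) w + frechet_derivative a (at x) w *\<^sub>R k x)) (at x)"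
    if x: "x \<in> S" for x
    using has_derivative_scaleR[OF smooth_has_deriv[OF psum1(1) S x] smooth_has_deriv[OF psum1(2) S x]] .
  have "(\<lambda>x. a x *\<^sub>R k x) differentiable_on S"
    unfolding differentiable_on_eq_differentiable_at[OF S] using hd differentiableI by blast
  moreover have "\<exists>h'. psum S h' \<and> (\<forall>x\<in>S. frechet_derivative (\<lambda>x. a x *\<^sub>R k x) (at x) v = h' x)" for v
  proof (intro exI conjI)
    show "psum S (\<lambda>x. a x *\<^sub>R frechet_derivative k (at x) v + frechet_derivative a (at x) v *\<^sub>R k x)"
      by (intro psum.psum2 psum.psum1 psum1 smooth_on_deriv)
    show "\<forall>x\<in>S. frechet_derivative (\<lambda>x. a x *\<^sub>R k x) (at x) v =
       a x *\<^sub>R frechet_derivative k (at x) v + frechet_derivative a (at x) v *\<^sub>R k x"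
    proof
      fix x assume x: "x \<in> S"
      show "frechet_derivative (\<lambda>x. a x *\<^sub>R k x) (at x) v =
       a x *\<^sub>R frechet_derivative k (at x) v + frechet_derivative a (at x) v *\<^sub>R k x"
        unfolding frechet_derivative_at[OF hd[OF x], symmetric] by simp
    qed
  qed
  ultimately show ?case by blast
next
  case (psum2 h1 h2)
  have hd: "((\<lambda>x. h1 x + h2 x) has_derivative
      (\<lambda>w. frechet_derivative h1 (at x) w + frechet_derivative h2 (at x) w)) (at x)"
    if x: "x \<in> S" for x
    using psum2.IH S x differentiable_on_eq_differentiable_at frechet_derivative_works
    by (intro has_derivative_add) blast+
  have "(\<lambda>x. h1 x + h2 x) differentiable_on S"
    unfolding differentiable_on_eq_differentiable_at[OF S] using hd differentiableI by blast
  moreover have "\<exists>h'. psum S h' \<and> (\<forall>x\<in>S. frechet_derivative (\<lambda>x. h1 x + h2 x) (at x) v = h' x)" for v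
  proof -
    obtain g1 where g1: "psum S g1" "\<forall>x\<in>S. frechet_derivative h1 (at x) v = g1 x" using psum2.IH by blast
    obtain g2 where g2: "psum S g2" "\<forall>x\<in>S. frechet_derivative h2 (at x) v = g2 x" using psum2.IH by blast
    show ?thesis
    proof (intro exI conjI)
      show "psum S (\<lambda>x. g1 x + g2 x)" using g1 g2 psum.psum2 by blast
      show "\<forall>x\<in>S. frechet_derivative (\<lambda>x. h1 x + h2 x) (at x) v = g1 x + g2 x"
      proof
        fix x assume x: "x \<in> S"
        show "frechet_derivative (\<lambda>x. h1 x + h2 x) (at x) v = g1 x + g2 x"
          unfolding frechet_derivative_at[OF hd[OF x], symmetric] using g1 g2 x by simp
      qed
    qed
  qed
  ultimately show ?case by blast
qed

lemma psum_smooth: "open S \<Longrightarrow> psum S h \<Longrightarrow> smooth_on S h"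
  by (rule smooth_coind[where X="psum S" and f0=h]) (use psum_deriv in blast)+

lemma smooth_scaleR: "open S \<Longrightarrow> smooth_on S a \<Longrightarrow> smooth_on S k \<Longrightarrow> smooth_on S (\<lambda>x. a x *\<^sub>R k x)"
  by (rule psum_smooth) (auto intro: psum1)

lemma smooth_mult: "open S \<Longrightarrow> smooth_on S a \<Longrightarrow> smooth_on S (k::_\<Rightarrow>real) \<Longrightarrow> smooth_on S (\<lambda>x. a x * k x)"
  using smooth_scaleR[of S a k] by simp

lemma smooth_add: "open S \<Longrightarrow> smooth_on S h1 \<Longrightarrow> smooth_on S h2 \<Longrightarrow> smooth_on S (\<lambda>x. h1 x + h2 x)"
proof -
  assume a: "open S" "smooth_on S h1" "smooth_on S h2"
  have "psum S (\<lambda>x. (\<lambda>x. 1::real) x *\<^sub>R h1 x + (\<lambda>x. 1::real) x *\<^sub>R h2 x)"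
    by (intro psum2 psum1 smooth_const a)
  from psum_smooth[OF a(1) this] show ?thesis by simp
qed

inductive csum :: "'a::real_normed_vector set \<Rightarrow> 'b::euclidean_space set \<Rightarrow> ('a \<Rightarrow> 'b) \<Rightarrow> ('a \<Rightarrow> 'c::real_normed_vector) \<Rightarrow> bool"
  for U V f where
  csum0: "csum U V f (\<lambda>x. 0)"
| csum1: "smooth_on U (a :: 'a \<Rightarrow> real) \<Longrightarrow> smooth_on V k \<Longrightarrow> csum U V f (\<lambda>x. a x *\<^sub>R k (f x))"
| csum2: "csum U V f h1 \<Longrightarrow> csum U V f h2 \<Longrightarrow> csum U V f (\<lambda>x. h1 x + h2 x)"

lemma csum_sum: "finite B \<Longrightarrow> (\<And>j. j \<in> B \<Longrightarrow> csum U V f (H j)) \<Longrightarrow> csum U V f (\<lambda>x. \<Sum>j\<in>B. H j x)"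
proof (induction B rule: finite_induct)
  case empty then show ?case by (simp add: csum0)
next
  case (insert j B)
  then show ?case by (simp add: csum2)
qed

lemma deriv_basis_expand:
  fixes L :: "'b::euclidean_space \<Rightarrow> 'c::real_normed_vector"
  assumes "linear L"
  shows "L w = (\<Sum>j\<in>Basis. (w \<bullet> j) *\<^sub>R L j)"
proof -
  have "L w = L (\<Sum>j\<in>Basis. (w \<bullet> j) *\<^sub>R j)" by (simp add: euclidean_representation)
  also have "\<dots> = (\<Sum>j\<in>Basis. (w \<bullet> j) *\<^sub>R L j)"
    using assms by (simp add: linear_sum linear_scale)
  finally show ?thesis .
qed

lemma csum_deriv:
  assumes U: "open U" and V: "open V" and f: "smooth_on U f" and fUV: "f ` U \<subseteq> V"
    and "csum U V f h"
  shows "h differentiable_on U \<and> (\<forall>v. \<exists>h'. csum U V f h' \<and> (\<forall>x\<in>U. frechet_derivative h (at x) v = h' x))"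
  using assms(5)
proof induction
  case csum0
  then show ?case by (auto intro!: exI[of _ "\<lambda>x. 0"] csum.csum0)
next
  case (csum1 a k)
  have fx: "f x \<in> V" if "x \<in> U" for x using fUV that by blast
  have hd: "((\<lambda>x. a x *\<^sub>R k (f x)) has_derivative
      (\<lambda>w. a x *\<^sub>R frechet_derivative k (at (f x)) (frechet_derivative f (at x) w) + frechet_derivative a (at x) w *\<^sub>R k (f x))) (at x)"
    if x: "x \<in> U" for x
  proof -
    have "((\<lambda>x. k (f x)) has_derivative (\<lambda>w. frechet_derivative k (at (f x)) (frechet_derivative f (at x) w))) (at x)"
      using diff_chain_at[OF smooth_has_deriv[OF f U x] smooth_has_deriv[OF csum1(2) V fx[OF x]]]
      by (simp add: o_def)
    from has_derivative_scaleR[OF smooth_has_deriv[OF csum1(1) U x] this] show ?thesis .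
  qed
  have "(\<lambda>x. a x *\<^sub>R k (f x)) differentiable_on U"
    unfolding differentiable_on_eq_differentiable_at[OF U] using hd differentiableI by blast
  moreover have "\<exists>h'. csum U V f h' \<and> (\<forall>x\<in>U. frechet_derivative (\<lambda>x. a x *\<^sub>R k (f x)) (at x) v = h' x)" for v
  proof -
    let ?h = "\<lambda>x. (\<Sum>j\<in>Basis. (\<lambda>x. a x * (frechet_derivative f (at x) v \<bullet> j)) x *\<^sub>R (\<lambda>y. frechet_derivative k (at y) j) (f x))
         + (\<lambda>x. frechet_derivative a (at x) v) x *\<^sub>R k (f x)"
    have "csum U V f ?h"
    proof (intro csum.csum2 csum_sum csum.csum1)
      show "smooth_on U (\<lambda>x. a x * (frechet_derivative f (at x) v \<bullet> j))" for j
        by (rule smooth_mult[OF U csum1(1)], rule smooth_linear_comp[OF U bounded_linear_inner_left smooth_on_deriv[OF f]])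
    qed (simp_all add: smooth_on_deriv csum1)
    moreover have "\<forall>x\<in>U. frechet_derivative (\<lambda>x. a x *\<^sub>R k (f x)) (at x) v = ?h x"
    proof
      fix x assume x: "x \<in> U"
      have lin: "linear (frechet_derivative k (at (f x)))"
        using smooth_has_deriv[OF csum1(2) V fx[OF x]] has_derivative_linear by blast
      show "frechet_derivative (\<lambda>x. a x *\<^sub>R k (f x)) (at x) v = ?h x"
        unfolding frechet_derivative_at[OF hd[OF x], symmetric]
        by (simp add: deriv_basis_expand[OF lin, of "frechet_derivative f (at x) v"] scaleR_sum_right)
    qed
    ultimately show ?thesis by blast
  qed
  ultimately show ?case by blast
next
  case (csum2 h1 h2)
  have hd: "((\<lambda>x. h1 x + h2 x) has_derivative
      (\<lambda>w. frechet_derivative h1 (at x) w + frechet_derivative h2 (at x) w)) (at x)"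
    if x: "x \<in> U" for x
    using csum2.IH U x differentiable_on_eq_differentiable_at frechet_derivative_works
    by (intro has_derivative_add) blast+
  have "(\<lambda>x. h1 x + h2 x) differentiable_on U"
    unfolding differentiable_on_eq_differentiable_at[OF U] using hd differentiableI by blast
  moreover have "\<exists>h'. csum U V f h' \<and> (\<forall>x\<in>U. frechet_derivative (\<lambda>x. h1 x + h2 x) (at x) v = h' x)" for v
  proof -
    obtain g1 where g1: "csum U V f g1" "\<forall>x\<in>U. frechet_derivative h1 (at x) v = g1 x" using csum2.IH by blast
    obtain g2 where g2: "csum U V f g2" "\<forall>x\<in>U. frechet_derivative h2 (at x) v = g2 x" using csum2.IH by blast
    show ?thesis
    proof (intro exI conjI)
      show "csum U V f (\<lambda>x. g1 x + g2 x)" using g1 g2 csum.csum2 by blast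
      show "\<forall>x\<in>U. frechet_derivative (\<lambda>x. h1 x + h2 x) (at x) v = g1 x + g2 x"
      proof
        fix x assume x: "x \<in> U"
        show "frechet_derivative (\<lambda>x. h1 x + h2 x) (at x) v = g1 x + g2 x"
          unfolding frechet_derivative_at[OF hd[OF x], symmetric] using g1 g2 x by simp
      qed
    qed
  qed
  ultimately show ?case by blast
qed

lemma smooth_comp:
  fixes f :: "'a::real_normed_vector \<Rightarrow> 'b::euclidean_space"
  assumes U: "open U" and V: "open V" and f: "smooth_on U f" and fUV: "f ` U \<subseteq> V"
    and k: "smooth_on V k"
  shows "smooth_on U (\<lambda>x. k (f x))"
proof -
  have X0: "csum U V f (\<lambda>x. (\<lambda>x. 1::real) x *\<^sub>R k (f x))" by (intro csum1 smooth_const U k)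
  show ?thesis
    by (rule smooth_coind[where X="csum U V f", OF U X0]) (use csum_deriv[OF U V f fUV] in auto)
qed

lemma smooth_coind':
  assumes S: "open S" and X0: "X f"
    and D: "\<And>h. X h \<Longrightarrow> h differentiable_on S"
    and DD: "\<And>h v. X h \<Longrightarrow> \<exists>h'. X h' \<and> (\<forall>x\<in>S. frechet_derivative h (at x) v = h' x)"
  shows "smooth_on S f"
  using smooth_coind[of S X f f, OF S X0 _ D DD] by blast

lemma inv_pow_deriv:
  fixes x c :: real
  assumes "x \<noteq> 0"
  shows "((\<lambda>x. c * inverse x ^ n) has_real_derivative (- c * real n * inverse x ^ Suc n)) (at x)"
proof -
  have "((\<lambda>x. c * inverse x ^ n) has_real_derivative
     c * (of_nat n * (- (inverse x ^ Suc (Suc 0)) * inverse x ^ (n - Suc 0)))) (at x)"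
    by (intro DERIV_cmult DERIV_power DERIV_inverse assms)
  moreover have "c * (of_nat n * (- (inverse x ^ Suc (Suc 0)) * inverse x ^ (n - Suc 0))) = - c * real n * inverse x ^ Suc n"
  proof (cases n)
    case (Suc m) then show ?thesis by (simp add: power_Suc algebra_simps)
  qed simp
  ultimately show ?thesis by (simp only:)
qed

lemma smooth_inverse_real: "smooth_on (- {0}) (\<lambda>x::real. inverse x)"
proof -
  have op: "open (- {0::real})" by auto
  let ?X = "\<lambda>h::real\<Rightarrow>real. \<exists>c n. h = (\<lambda>x. c * inverse x ^ n)"
  have X0: "?X (\<lambda>x. inverse x)" by (rule exI[of _ 1], rule exI[of _ 1]) simp
  show ?thesis
  proof (rule smooth_coind'[where X="?X", OF op X0])
    fix h assume "?X h"
    then obtain c n where h: "h = (\<lambda>x. c * inverse x ^ n)" by blast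
    show "h differentiable_on - {0}"
      unfolding differentiable_on_eq_differentiable_at[OF op] h
      using inv_pow_deriv has_field_derivative_imp_has_derivative differentiableI by fastforce
  next
    fix h v assume "?X h"
    then obtain c n where h: "h = (\<lambda>x. c * inverse x ^ n)" by blast
    have "\<forall>x\<in>- {0}. frechet_derivative h (at x) v = (- c * real n * v) * inverse x ^ Suc n"
    proof
      fix x :: real assume "x \<in> - {0}"
      then have "(h has_derivative (*) (- c * real n * inverse x ^ Suc n)) (at x)"
        unfolding h using inv_pow_deriv has_field_derivative_imp_has_derivative by blast
      then show "frechet_derivative h (at x) v = (- c * real n * v) * inverse x ^ Suc n"
        using frechet_derivative_at by (metis mult.commute mult.left_commute)
    qed
    then show "\<exists>h'. ?X h' \<and> (\<forall>x\<in>- {0}. frechet_derivative h (at x) v = h' x)" by blast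
  qed
qed

lemma smooth_recip:
  fixes a :: "'a::real_normed_vector \<Rightarrow> real"
  assumes "open U" "smooth_on U a" "\<forall>x\<in>U. a x \<noteq> 0"
  shows "smooth_on U (\<lambda>x. inverse (a x))"
  by (rule smooth_comp[OF assms(1) _ assms(2) _ smooth_inverse_real]) (use assms(3) in auto)

lemma lin_real: "linear (L::real\<Rightarrow>real) \<Longrightarrow> L t = t * L 1"
  using linear_scale[of L t 1] by simp

lemma smooth_inv1:
  fixes f :: "real \<Rightarrow> real"
  assumes U: "open U" and f: "smooth_on U f" and inj: "inj_on f U" and fU: "open (f ` U)"
    and nz: "\<forall>x\<in>U. frechet_derivative f (at x) 1 \<noteq> 0"
  shows "smooth_on (f ` U) (inv_into U f)"
proof -
  define g where "g = inv_into U f"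
  define c where "c = (\<lambda>x. frechet_derivative f (at x) 1)"
  have gf: "g (f x) = x" if "x \<in> U" for x using inj that g_def by simp
  have lin: "linear (frechet_derivative f (at x))" if "x \<in> U" for x
    using smooth_has_deriv[OF f U that] has_derivative_linear by blast
  have gd: "(g has_derivative (\<lambda>t. t / c x)) (at (f x))" if x: "x \<in> U" for x
  proof (rule has_derivative_inverse_strong[OF U x smooth_cont[OF f]])
    show "g (f x) = x" if "x \<in> U" for x using gf that by blast
    show "(f has_derivative frechet_derivative f (at x)) (at x)" using smooth_has_deriv[OF f U x] .
    show "frechet_derivative f (at x) \<circ> (\<lambda>t. t / c x) = id"
    proof (rule ext)
      fix t
      have "frechet_derivative f (at x) (t / c x) = (t / c x) * c x"
        using lin_real[OF lin[OF x]] unfolding c_def by blast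
      moreover have "c x \<noteq> 0" using nz x unfolding c_def by blast
      ultimately show "(frechet_derivative f (at x) \<circ> (\<lambda>t. t / c x)) t = id t" by simp
    qed
  qed
  have gU: "g y \<in> U" "f (g y) = y" if "y \<in> f ` U" for y
    using that gf by auto
  let ?X = "\<lambda>h::real\<Rightarrow>real. \<exists>R::real\<Rightarrow>real. smooth_on U R \<and> h = (\<lambda>y. R (g y))"
  have "smooth_on (f ` U) (\<lambda>y. (\<lambda>x. x) (g y))"
  proof (rule smooth_coind[where X="?X", OF fU])
    show "?X (\<lambda>y. (\<lambda>x. x) (g y))" using smooth_ident[OF U] by blast
  next
    fix h assume "?X h"
    then obtain R where R: "smooth_on U R" "h = (\<lambda>y. R (g y))" by blast
    have hd: "(h has_derivative (\<lambda>t. frechet_derivative R (at (g y)) (t / c (g y)))) (at y)"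
      if y: "y \<in> f ` U" for y
    proof -
      have "(g has_derivative (\<lambda>t. t / c (g y))) (at y)" using gd[OF gU(1)[OF y]] gU(2)[OF y] by simp
      from diff_chain_at[OF this smooth_has_deriv[OF R(1) U gU(1)[OF y]]]
      show ?thesis unfolding R(2) by (simp add: o_def)
    qed
    then show "h differentiable_on f ` U"
      unfolding differentiable_on_eq_differentiable_at[OF fU] using differentiableI by blast
    fix v
    let ?R' = "\<lambda>x. v * (inverse (c x) * frechet_derivative R (at x) 1)"
    have "smooth_on U ?R'"
      by (intro smooth_mult[OF U] smooth_const[OF U] smooth_recip[OF U] smooth_on_deriv f R(1))
        (use nz c_def smooth_on_deriv[OF f] in auto)
    moreover have "\<forall>y\<in>f ` U. frechet_derivative h (at y) v = ?R' (g y)"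
    proof
      fix y assume y: "y \<in> f ` U"
      have "frechet_derivative h (at y) v = frechet_derivative R (at (g y)) (v / c (g y))"
        using frechet_derivative_at[OF hd[OF y]] by metis
      also have "\<dots> = ?R' (g y)"
      proof -
        have "linear (frechet_derivative R (at (g y)))"
          using smooth_has_deriv[OF R(1) U gU(1)[OF y]] has_derivative_linear by blast
        from lin_real[OF this, of "v / c (g y)"] show ?thesis by (simp add: divide_inverse mult.assoc)
      qed
      finally show "frechet_derivative h (at y) v = ?R' (g y)" .
    qed
    ultimately show "\<exists>h'. ?X h' \<and> (\<forall>y\<in>f ` U. frechet_derivative h (at y) v = h' y)" by blast
  qed simp
  then show ?thesis unfolding g_def by simp
qed

lemma smooth_local_inv:
  fixes f :: "'a::euclidean_space \<Rightarrow> 'a"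
  assumes U: "open U" and f: "smooth_on U f" and x0: "x0 \<in> U"
    and bij: "bij (frechet_derivative f (at x0))"
  obtains U' V g where "open U'" "U' \<subseteq> U" "x0 \<in> U'" "open V" "f x0 \<in> V"
    "homeomorphism U' V f g"
    "\<And>y. y \<in> V \<Longrightarrow> (g has_derivative inv (frechet_derivative f (at (g y)))) (at y)"
    "\<And>y. y \<in> V \<Longrightarrow> bij (frechet_derivative f (at (g y)))"
proof -
  define F where "F = (\<lambda>x. Blinfun (frechet_derivative f (at x)))"
  have bl: "bounded_linear (frechet_derivative f (at x))" if "x \<in> U" for x
    using smooth_has_deriv[OF f U that] has_derivative_bounded_linear by blast
  have FF: "blinfun_apply (F x) = frechet_derivative f (at x)" if "x \<in> U" for x
    unfolding F_def using bounded_linear_Blinfun_apply[OF bl[OF that]] .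
  have derf: "(f has_derivative blinfun_apply (F x)) (at x)" if "x \<in> U" for x
    using FF[OF that] smooth_has_deriv[OF f U that] by simp
  have contf: "continuous_on U F"
  proof (rule continuous_on_blinfun_componentwise)
    fix i :: 'a
    show "continuous_on U (\<lambda>x. blinfun_apply (F x) i)"
      by (rule continuous_on_eq[OF smooth_deriv_cont[OF f, of i]]) (simp add: FF)
  qed
  have linD: "linear (frechet_derivative f (at x0))" using bl[OF x0] bounded_linear.linear by blast
  obtain L where L: "linear L" "L \<circ> frechet_derivative f (at x0) = id"
    using linear_injective_left_inverse[OF linD] bij bij_is_inj by blast
  have invf: "Blinfun L o\<^sub>L F x0 = id_blinfun"
  proof (rule blinfun_eqI)
    fix i
    have "bounded_linear L" using L(1) linear_conv_bounded_linear by blast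
    then have "blinfun_apply (Blinfun L o\<^sub>L F x0) i = L (frechet_derivative f (at x0) i)"
      by (simp add: bounded_linear_Blinfun_apply FF[OF x0])
    also have "\<dots> = i" using L(2) by (metis comp_apply id_apply)
    finally show "blinfun_apply (Blinfun L o\<^sub>L F x0) i = blinfun_apply id_blinfun i" by simp
  qed
  obtain U' V g g' where R: "open U'" "U' \<subseteq> U" "x0 \<in> U'" "open V" "f x0 \<in> V" "homeomorphism U' V f g"
    "\<And>y. y \<in> V \<Longrightarrow> (g has_derivative (g' y)) (at y)"
    "\<And>y. y \<in> V \<Longrightarrow> g' y = inv (blinfun_apply (F (g y)))"
    "\<And>y. y \<in> V \<Longrightarrow> bij (blinfun_apply (F (g y)))"
  proof -
    show ?thesis
      apply (rule inverse_function_theorem[OF U derf contf x0 invf])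
       apply simp
      subgoal for U' V g g' by (rule that[of U' V g g'])
      done
  qed
  have gV: "g y \<in> U" if "y \<in> V" for y
    using R(2,6) that unfolding homeomorphism_def by blast
  show ?thesis
  proof (rule that[OF R(1-6)])
    show "(g has_derivative inv (frechet_derivative f (at (g y)))) (at y)" if "y \<in> V" for y
      using R(7,8)[OF that] FF[OF gV[OF that]] by simp
    show "bij (frechet_derivative f (at (g y)))" if "y \<in> V" for y
      using R(9)[OF that] FF[OF gV[OF that]] by simp
  qed
qed

lemma diffeo_open_image:
  assumes U: "open U" "open (g ` U)" "smooth_on (g ` U) (inv_into U g)" "inj_on g U"
    and T: "open T" "T \<subseteq> U"
  shows "open (g ` T)"
proof -
  have "g ` T = g ` U \<inter> inv_into U g -` T"
  proof
    show "g ` T \<subseteq> g ` U \<inter> inv_into U g -` T"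
    proof
      fix y assume "y \<in> g ` T"
      then obtain t where t: "t \<in> T" "y = g t" by blast
      then have tU: "t \<in> U" using T(2) by blast
      have "inv_into U g y = t" using inv_into_f_f[OF U(4) tU] t(2) by simp
      then show "y \<in> g ` U \<inter> inv_into U g -` T" using t tU by blast
    qed
    show "g ` U \<inter> inv_into U g -` T \<subseteq> g ` T"
    proof
      fix y assume "y \<in> g ` U \<inter> inv_into U g -` T"
      then obtain u where u: "u \<in> U" "y = g u" "inv_into U g y \<in> T" by blast
      then have "inv_into U g y = u" using inv_into_f_f[OF U(4) u(1)] by simp
      then show "y \<in> g ` T" using u by blast
    qed
  qed
  moreover have "open (g ` U \<inter> inv_into U g -` T)"
  proof -
    have "open (inv_into U g -` T \<inter> g ` U)"
      using continuous_on_open_vimage[OF U(2), THEN iffD1, OF smooth_cont[OF U(3)]] T(1) by blast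
    then show ?thesis by (simp add: Int_commute)
  qed
  ultimately show ?thesis by simp
qed

lemma diffeo_germ_inv:
  assumes d: "diffeo_germ a b \<phi>" and U: "open U" "a \<in> U" "open (\<phi> ` U)" "inj_on \<phi> U"
    "smooth_on U \<phi>" "smooth_on (\<phi> ` U) (inv_into U \<phi>)"
  shows "diffeo_germ b a (inv_into U \<phi>)"
proof -
  have pa: "\<phi> a = b" using d unfolding diffeo_germ_def by blast
  have bij: "bij_betw \<phi> U (\<phi> ` U)" using U(4) by (simp add: bij_betw_imageI)
  have e1: "inv_into U \<phi> b = a" using inv_into_f_f[OF U(4) U(2)] pa by simp
  have e2: "inv_into U \<phi> ` \<phi> ` U = U" using inv_into_image_cancel[OF U(4)] by blast
  have e3: "\<forall>x\<in>U. inv_into (\<phi> ` U) (inv_into U \<phi>) x = \<phi> x"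
    using inv_into_inv_into_eq[OF bij] by blast
  show ?thesis unfolding diffeo_germ_def
  proof (intro conjI exI[of _ "\<phi> ` U"])
    show "inv_into U \<phi> b = a" by (rule e1)
    show "open (\<phi> ` U)" using U by blast
    show "b \<in> \<phi> ` U" using U(2) pa by blast
    show "open (inv_into U \<phi> ` \<phi> ` U)" using e2 U by simp
    show "inj_on (inv_into U \<phi>) (\<phi> ` U)" using inj_on_inv_into by blast
    show "smooth_on (\<phi> ` U) (inv_into U \<phi>)" by (rule U)
    show "smooth_on (inv_into U \<phi> ` \<phi> ` U) (inv_into (\<phi> ` U) (inv_into U \<phi>))"
      unfolding e2 using smooth_on_cong[OF U(5) U(1) e3] .
  qed
qed

lemma diffeo_germ_comp:
  fixes f g :: "'a::euclidean_space \<Rightarrow> 'a"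
  assumes df: "diffeo_germ a b f" and dg: "diffeo_germ b c g"
  shows "diffeo_germ a c (\<lambda>x. g (f x))"
proof -
  obtain U1 where U1: "f a = b" "open U1" "a \<in> U1" "open (f ` U1)" "inj_on f U1"
     "smooth_on U1 f" "smooth_on (f ` U1) (inv_into U1 f)"
    using df unfolding diffeo_germ_def by blast
  obtain U2 where U2: "g b = c" "open U2" "b \<in> U2" "open (g ` U2)" "inj_on g U2"
     "smooth_on U2 g" "smooth_on (g ` U2) (inv_into U2 g)"
    using dg unfolding diffeo_germ_def by blast
  define W where "W = f -` U2 \<inter> U1"
  have W: "open W" unfolding W_def using continuous_on_open_vimage[OF U1(2)] smooth_cont[OF U1(6)] U2(2) by blast
  have aW: "a \<in> W" unfolding W_def using U1 U2 by auto
  have WU1: "W \<subseteq> U1" unfolding W_def by blast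
  have fW: "f ` W \<subseteq> U2" unfolding W_def by blast
  have ofW: "open (f ` W)" by (rule diffeo_open_image[OF U1(2,4,7,5) W WU1])
  have ogfW: "open (g ` f ` W)" by (rule diffeo_open_image[OF U2(2,4,7,5) ofW fW])
  have imgeq: "(\<lambda>x. g (f x)) ` W = g ` f ` W" by auto
  have inj: "inj_on (\<lambda>x. g (f x)) W"
    using inj_on_subset[OF U1(5) WU1] inj_on_subset[OF U2(5) fW]
    by (auto simp: inj_on_def)
  have sm: "smooth_on W (\<lambda>x. g (f x))"
    by (rule smooth_comp[OF W U2(2) smooth_on_subset[OF U1(6) WU1 W] fW U2(6)])
  have invq: "\<forall>y\<in>(\<lambda>x. g (f x)) ` W. inv_into W (\<lambda>x. g (f x)) y = inv_into U1 f (inv_into U2 g y)"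
  proof
    fix y assume "y \<in> (\<lambda>x. g (f x)) ` W"
    then obtain w where w: "w \<in> W" "y = g (f w)" by blast
    have "inv_into W (\<lambda>x. g (f x)) y = w" using inv_into_f_f[OF inj w(1)] w(2) by simp
    moreover have "inv_into U2 g y = f w" using inv_into_f_f[OF U2(5), of "f w"] w fW by blast
    moreover have "inv_into U1 f (f w) = w" using inv_into_f_f[OF U1(5), of w] w WU1 by blast
    ultimately show "inv_into W (\<lambda>x. g (f x)) y = inv_into U1 f (inv_into U2 g y)" by simp
  qed
  have sub1: "g ` f ` W \<subseteq> g ` U2" using fW by blast
  have sub2: "inv_into U2 g ` (g ` f ` W) \<subseteq> f ` U1"
  proof
    fix z assume "z \<in> inv_into U2 g ` (g ` f ` W)"
    then obtain w where w: "w \<in> W" "z = inv_into U2 g (g (f w))" by blast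
    then have "z = f w" using inv_into_f_f[OF U2(5), of "f w"] fW by blast
    then show "z \<in> f ` U1" using w WU1 by blast
  qed
  have sminv: "smooth_on (g ` f ` W) (\<lambda>y. inv_into U1 f (inv_into U2 g y))"
    by (rule smooth_comp[OF ogfW U1(4) smooth_on_subset[OF U2(7) sub1 ogfW] sub2 U1(7)])
  show ?thesis unfolding diffeo_germ_def
  proof (intro conjI exI[of _ W])
    show "g (f a) = c" using U1 U2 by simp
    show "open W" "a \<in> W" using W aW by auto
    show "open ((\<lambda>x. g (f x)) ` W)" using ogfW imgeq by simp
    show "inj_on (\<lambda>x. g (f x)) W" by (rule inj)
    show "smooth_on W (\<lambda>x. g (f x))" by (rule sm)
    show "smooth_on ((\<lambda>x. g (f x)) ` W) (inv_into W (\<lambda>x. g (f x)))"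
      unfolding imgeq by (rule smooth_on_cong[OF sminv ogfW]) (use invq imgeq in simp)
  qed
qed

lemma diffeo1:
  fixes f :: "real \<Rightarrow> real"
  assumes U: "open U" and f: "smooth_on U f" and x0: "x0 \<in> U"
    and nz: "frechet_derivative f (at x0) 1 \<noteq> 0"
  shows "diffeo_germ x0 (f x0) f"
proof -
  have lin: "linear (frechet_derivative f (at x0))"
    using smooth_has_deriv[OF f U x0] has_derivative_linear by blast
  have bj: "bij (frechet_derivative f (at x0))"
  proof (rule bijI)
    show "inj (frechet_derivative f (at x0))"
    proof (rule injI)
      fix s t assume "frechet_derivative f (at x0) s = frechet_derivative f (at x0) t"
      then have "s * frechet_derivative f (at x0) 1 = t * frechet_derivative f (at x0) 1"
        using lin_real[OF lin, of s] lin_real[OF lin, of t] by simp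
      then show "s = t" using nz by simp
    qed
    show "surj (frechet_derivative f (at x0))"
    proof (rule surjI)
      fix t show "frechet_derivative f (at x0) (t / frechet_derivative f (at x0) 1) = t"
        using lin_real[OF lin, of "t / frechet_derivative f (at x0) 1"] nz by simp
    qed
  qed
  obtain U' V g where R: "open U'" "U' \<subseteq> U" "x0 \<in> U'" "open V" "f x0 \<in> V"
    "homeomorphism U' V f g"
    "\<And>y. y \<in> V \<Longrightarrow> (g has_derivative inv (frechet_derivative f (at (g y)))) (at y)"
    "\<And>y. y \<in> V \<Longrightarrow> bij (frechet_derivative f (at (g y)))"
    apply (rule smooth_local_inv[OF U f x0 bj])
    subgoal for U' V g by (rule that[of U' V g])
    done
  have fU': "f ` U' = V" and gf: "\<And>x. x \<in> U' \<Longrightarrow> g (f x) = x"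
    using R(6) unfolding homeomorphism_def by auto
  have inj: "inj_on f U'" using gf by (metis inj_on_inverseI)
  have nz': "\<forall>x\<in>U'. frechet_derivative f (at x) 1 \<noteq> 0"
  proof
    fix x assume x: "x \<in> U'"
    then have b: "bij (frechet_derivative f (at x))" using R(8)[of "f x"] gf fU' by auto
    have lx: "linear (frechet_derivative f (at x))"
      using smooth_has_deriv[OF f U] x R(2) has_derivative_linear by blast
    show "frechet_derivative f (at x) 1 \<noteq> 0"
      using b bij_is_inj[OF b] linear_0[OF lx] by (metis inj_eq one_neq_zero)
  qed
  have smU': "smooth_on U' f" using smooth_on_subset[OF f R(2,1)] .
  show ?thesis unfolding diffeo_germ_def
  proof (intro conjI exI[of _ U'] refl)
    show "open U'" "x0 \<in> U'" "inj_on f U'" "smooth_on U' f" using R inj smU' by auto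
    show "open (f ` U')" using fU' R(4) by simp
    show "smooth_on (f ` U') (inv_into U' f)"
      by (rule smooth_inv1[OF R(1) smU' inj]) (use fU' R(4) nz' in auto)
  qed
qed

lemma diffeo_deriv_inj:
  fixes \<phi> :: "'a::euclidean_space \<Rightarrow> 'a"
  assumes U: "open U" "open (\<phi> ` U)" "inj_on \<phi> U" "smooth_on U \<phi>" "smooth_on (\<phi> ` U) (inv_into U \<phi>)"
    and x: "x \<in> U"
  shows "bij (frechet_derivative \<phi> (at x))"
proof -
  have d1: "(\<phi> has_derivative frechet_derivative \<phi> (at x)) (at x)" by (rule smooth_has_deriv[OF U(4,1) x])
  have d2: "(inv_into U \<phi> has_derivative frechet_derivative (inv_into U \<phi>) (at (\<phi> x))) (at (\<phi> x))"
    by (rule smooth_has_deriv[OF U(5,2)]) (use x in blast)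
  have "((\<lambda>y. inv_into U \<phi> (\<phi> y)) has_derivative
      (\<lambda>h. frechet_derivative (inv_into U \<phi>) (at (\<phi> x)) (frechet_derivative \<phi> (at x) h))) (at x)"
    using diff_chain_at[OF d1 d2] by (simp add: o_def)
  moreover have "((\<lambda>y. inv_into U \<phi> (\<phi> y)) has_derivative (\<lambda>h. h)) (at x)"
    using has_derivative_transform_within_open[OF has_derivative_ident U(1) x, of "\<lambda>y. inv_into U \<phi> (\<phi> y)"]
      U(3) by simp
  ultimately have "(\<lambda>h. frechet_derivative (inv_into U \<phi>) (at (\<phi> x)) (frechet_derivative \<phi> (at x) h)) = (\<lambda>h. h)"
    using has_derivative_unique by blast
  then have inj: "inj (frechet_derivative \<phi> (at x))" by (metis injI)
  have lin: "linear (frechet_derivative \<phi> (at x))" using d1 has_derivative_linear by blast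
  show ?thesis using inj linear_inj_imp_surj[OF lin inj] bij_def by blast
qed

lemma vec2_expand: "(h::real^2) = h$1 *\<^sub>R axis 1 1 + h$2 *\<^sub>R axis 2 1"
  by (simp add: vec_eq_iff forall_2 axis_def)

lemma lin2: "linear (L::real^2 \<Rightarrow> 'b::real_vector) \<Longrightarrow> L h = h$1 *\<^sub>R L (axis 1 1) + h$2 *\<^sub>R L (axis 2 1)"
proof -
  assume l: "linear L"
  have "L h = L (h$1 *\<^sub>R axis 1 1 + h$2 *\<^sub>R axis 2 1)" using vec2_expand[of h] by simp
  also have "\<dots> = h$1 *\<^sub>R L (axis 1 1) + h$2 *\<^sub>R L (axis 2 1)"
    using l by (simp add: linear_add linear_scale)
  finally show ?thesis .
qed

lemma lin2r: "linear (L::real^2 \<Rightarrow> real) \<Longrightarrow> L h = h$1 * L (axis 1 1) + h$2 * L (axis 2 1)"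
  using lin2[of L h] by simp

lemma inner2: "(a::real^2) \<bullet> b = a$1 * b$1 + a$2 * b$2"
  by (simp add: inner_vec_def sum_2)

lemma vec2_eq: "(x::real^2) = y \<longleftrightarrow> x$1 = y$1 \<and> x$2 = y$2"
  by (simp add: vec_eq_iff forall_2)

lemma wedge_ker:
  fixes \<alpha> \<beta> :: "real^2 \<Rightarrow> real"
  assumes la: "linear \<alpha>" and lb: "linear \<beta>"
    and w: "\<alpha> (axis 1 1) * \<beta> (axis 2 1) - \<alpha> (axis 2 1) * \<beta> (axis 1 1) = 0"
    and nz: "\<alpha> h0 \<noteq> 0" and ah0: "\<alpha> h = 0"
  shows "\<beta> h = 0"
proof -
  define a1 where "a1 = \<alpha> (axis 1 1)"
  define a2 where "a2 = \<alpha> (axis 2 1)"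
  define b1 where "b1 = \<beta> (axis 1 1)"
  define b2 where "b2 = \<beta> (axis 2 1)"
  have ah: "\<alpha> h = h$1 * a1 + h$2 * a2" unfolding a1_def a2_def by (rule lin2r[OF la])
  have bh: "\<beta> h = h$1 * b1 + h$2 * b2" unfolding b1_def b2_def by (rule lin2r[OF lb])
  have w': "a1 * b2 = a2 * b1" using w a1_def a2_def b1_def b2_def by simp
  have "\<alpha> h0 = h0$1 * a1 + h0$2 * a2" unfolding a1_def a2_def by (rule lin2r[OF la])
  then have "a1 \<noteq> 0 \<or> a2 \<noteq> 0" using nz by auto
  moreover have "a1 * \<beta> h = b1 * \<alpha> h + h$2 * (a1 * b2 - a2 * b1)"
    unfolding ah bh by (simp add: algebra_simps)
  moreover have "a2 * \<beta> h = b2 * \<alpha> h + h$1 * (a2 * b1 - a1 * b2)"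
    unfolding ah bh by (simp add: algebra_simps)
  ultimately have "a1 \<noteq> 0 \<or> a2 \<noteq> 0" "a1 * \<beta> h = 0" "a2 * \<beta> h = 0"
    using ah0 w' by simp_all
  then show ?thesis by auto
qed

lemma ker_wedge:
  fixes \<alpha> \<beta> :: "real^2 \<Rightarrow> real"
  assumes la: "linear \<alpha>" and lb: "linear \<beta>"
    and k: "\<And>h. \<alpha> h = 0 \<Longrightarrow> \<beta> h = 0"
  shows "\<alpha> (axis 1 1) * \<beta> (axis 2 1) - \<alpha> (axis 2 1) * \<beta> (axis 1 1) = 0"
proof -
  define h where "h = (- \<alpha> (axis 2 1)) *\<^sub>R axis 1 1 + (\<alpha> (axis 1 1)) *\<^sub>R (axis 2 1 :: real^2)"
  have h1: "h$1 = - \<alpha> (axis 2 1)" and h2: "h$2 = \<alpha> (axis 1 1)" unfolding h_def by (simp_all add: axis_def)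
  have "\<alpha> h = 0" using lin2r[OF la, of h] h1 h2 by simp
  then have "\<beta> h = 0" by (rule k)
  then show ?thesis using lin2r[OF lb, of h] h1 h2 by (simp add: algebra_simps)
qed

lemma nz_of_surj: "surj (L::'a \<Rightarrow> real) \<Longrightarrow> \<exists>h. L h \<noteq> 0"
  by (metis surjD zero_neq_one)

lemma surj_of_nz:
  assumes "linear (L::'a::real_vector \<Rightarrow> real)" "L h0 \<noteq> 0" shows "surj L"
proof (rule surjI)
  fix t show "L ((t / L h0) *\<^sub>R h0) = t" using assms by (simp add: linear_scale)
qed

definition rot2 :: "real^2 \<Rightarrow> real^2" where
  "rot2 w = (- (w$2)) *\<^sub>R axis 1 1 + (w$1) *\<^sub>R axis 2 1"

lemma rot2_comp: "(rot2 w)$1 = - (w$2)" "(rot2 w)$2 = w$1"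
  unfolding rot2_def by (simp_all add: axis_def)

lemma rot2_ker: "w \<bullet> rot2 w = 0"
  by (simp add: inner2 rot2_comp)

lemma nz2: "(w::real^2) \<noteq> 0 \<longleftrightarrow> w$1 \<noteq> 0 \<or> w$2 \<noteq> 0"
  using vec2_eq[of w 0] by simp

lemma rot2_nz: "w \<noteq> 0 \<Longrightarrow> rot2 w \<noteq> 0"
  by (auto simp: nz2 rot2_comp)

lemma ker_line:
  assumes nz: "(w::real^2) \<noteq> 0" and k: "w \<bullet> h = 0"
  shows "\<exists>t. h = t *\<^sub>R rot2 w"
proof -
  define N where "N = w$1 * w$1 + w$2 * w$2"
  have N: "N \<noteq> 0" using nz unfolding nz2 N_def
    by (metis add_nonneg_eq_0_iff mult_eq_0_iff zero_le_square)
  have k': "w$1 * h$1 + w$2 * h$2 = 0" using k by (simp add: inner2)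
  define t where "t = (h$2 * w$1 - h$1 * w$2) / N"
  have "t * w$1 = h$2"
  proof -
    have e: "w$1 * h$1 = - (w$2 * h$2)" using k' by linarith
    have "(h$2 * w$1 - h$1 * w$2) * w$1 = h$2 * (w$1 * w$1) - w$2 * (w$1 * h$1)" by (simp add: algebra_simps)
    also have "\<dots> = h$2 * (w$1 * w$1) + w$2 * (w$2 * h$2)" using e by simp
    also have "\<dots> = h$2 * N" by (simp add: N_def algebra_simps)
    finally have "(h$2 * w$1 - h$1 * w$2) * w$1 = h$2 * N" .
    then show ?thesis using N unfolding t_def by (simp add: field_simps)
  qed
  moreover have "- (t * w$2) = h$1"
  proof -
    have e: "w$2 * h$2 = - (w$1 * h$1)" using k' by linarith
    have "(h$2 * w$1 - h$1 * w$2) * w$2 = w$1 * (w$2 * h$2) - h$1 * (w$2 * w$2)" by (simp add: algebra_simps)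
    also have "\<dots> = - (w$1 * (w$1 * h$1)) - h$1 * (w$2 * w$2)" using e by simp
    also have "\<dots> = - (h$1 * N)" by (simp add: N_def algebra_simps)
    finally have "(h$2 * w$1 - h$1 * w$2) * w$2 = - (h$1 * N)" .
    then show ?thesis using N unfolding t_def by (simp add: field_simps)
  qed
  ultimately have "h = t *\<^sub>R rot2 w" by (simp add: vec2_eq rot2_comp)
  then show ?thesis by blast
qed

lemma kernel_image_eq:
  fixes \<Phi> :: "real^2 \<Rightarrow> real^2"
  assumes lin: "linear \<Phi>" and inj: "inj \<Phi>" and nz: "w \<noteq> 0" and nz': "w' \<noteq> 0"
    and c: "w' \<bullet> \<Phi> (rot2 w) = 0"
  shows "\<Phi> ` {h. w \<bullet> h = 0} = {h. w' \<bullet> h = 0}"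
proof
  show "\<Phi> ` {h. w \<bullet> h = 0} \<subseteq> {h. w' \<bullet> h = 0}"
  proof
    fix y assume "y \<in> \<Phi> ` {h. w \<bullet> h = 0}"
    then obtain h where h: "w \<bullet> h = 0" "y = \<Phi> h" by blast
    obtain t where "h = t *\<^sub>R rot2 w" using ker_line[OF nz h(1)] by blast
    then have "y = t *\<^sub>R \<Phi> (rot2 w)" using h(2) lin by (simp add: linear_scale)
    then show "y \<in> {h. w' \<bullet> h = 0}" using c by simp
  qed
  show "{h. w' \<bullet> h = 0} \<subseteq> \<Phi> ` {h. w \<bullet> h = 0}"
  proof
    fix y assume "y \<in> {h. w' \<bullet> h = 0}"
    then have y: "w' \<bullet> y = 0" by simp
    let ?r = "\<Phi> (rot2 w)"
    have rnz: "?r \<noteq> 0" using inj rot2_nz[OF nz] linear_0[OF lin] by (metis injD)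
    obtain t1 where t1: "y = t1 *\<^sub>R rot2 w'" using ker_line[OF nz' y] by blast
    obtain t2 where t2: "?r = t2 *\<^sub>R rot2 w'" using ker_line[OF nz' c] by blast
    have t2nz: "t2 \<noteq> 0" using rnz t2 by auto
    have "y = (t1 / t2) *\<^sub>R ?r" using t1 t2 t2nz by simp
    also have "\<dots> = \<Phi> ((t1 / t2) *\<^sub>R rot2 w)" using lin by (simp add: linear_scale)
    finally have "y = \<Phi> ((t1 / t2) *\<^sub>R rot2 w)" .
    moreover have "w \<bullet> ((t1 / t2) *\<^sub>R rot2 w) = 0" by (simp add: rot2_ker)
    ultimately show "y \<in> \<Phi> ` {h. w \<bullet> h = 0}" by blast
  qed
qed

lemma density_zero:
  fixes c :: "real^2 \<Rightarrow> real"
  assumes W: "open W" "W \<subseteq> Us" and nd: "interior (closure (Us \<inter> sing_set g)) = {}"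
    and cc: "continuous_on W c" and reg: "\<And>u. u \<in> W \<Longrightarrow> u \<notin> sing_set g \<Longrightarrow> c u = 0"
    and u: "u \<in> W"
  shows "c u = 0"
proof (rule ccontr)
  assume cu: "c u \<noteq> 0"
  define Oo where "Oo = c -` (- {0}) \<inter> W"
  have "open Oo" unfolding Oo_def
    using continuous_on_open_vimage[OF W(1), THEN iffD1, OF cc] by blast
  moreover have "Oo \<subseteq> closure (Us \<inter> sing_set g)"
  proof
    fix x assume "x \<in> Oo"
    then have "x \<in> W" "c x \<noteq> 0" unfolding Oo_def by auto
    then have "x \<in> Us \<inter> sing_set g" using reg W(2) by blast
    then show "x \<in> closure (Us \<inter> sing_set g)" using closure_subset by blast
  qed
  ultimately have "Oo \<subseteq> interior (closure (Us \<inter> sing_set g))" by (rule interior_maximal[rotated])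
  moreover have "u \<in> Oo" unfolding Oo_def using cu u by simp
  ultimately show False using nd by blast
qed

lemma deriv_eq_comp:
  assumes E: "open E" "u \<in> E" and eq: "\<And>x. x \<in> E \<Longrightarrow> F1 (G1 x) = F2 (G2 x)"
    and d1: "(G1 has_derivative A1) (at u)" and d2: "(F1 has_derivative B1) (at (G1 u))"
    and d3: "(G2 has_derivative A2) (at u)" and d4: "(F2 has_derivative B2) (at (G2 u))"
  shows "B1 (A1 h) = B2 (A2 h)"
proof -
  have c1: "((\<lambda>x. F1 (G1 x)) has_derivative (\<lambda>h. B1 (A1 h))) (at u)"
    using diff_chain_at[OF d1 d2] by (simp add: o_def)
  have c2: "((\<lambda>x. F2 (G2 x)) has_derivative (\<lambda>h. B2 (A2 h))) (at u)"
    using diff_chain_at[OF d3 d4] by (simp add: o_def)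
  have "((\<lambda>x. F2 (G2 x)) has_derivative (\<lambda>h. B1 (A1 h))) (at u)"
    by (rule has_derivative_transform_within_open[OF c1 E]) (use eq in simp)
  then have "(\<lambda>h. B1 (A1 h)) = (\<lambda>h. B2 (A2 h))" using c2 has_derivative_unique by blast
  then show ?thesis by metis
qed

lemma ev_compose:
  assumes "continuous_on U f" "open U" "x \<in> U" "eventually P (nhds (f x))"
  shows "eventually (\<lambda>u. P (f u)) (nhds x)"
proof -
  obtain S where S: "open S" "f x \<in> S" "\<forall>y\<in>S. P y" using assms(4) unfolding eventually_nhds by blast
  have "open (f -` S \<inter> U)" using continuous_on_open_vimage[OF assms(2), THEN iffD1, OF assms(1)] S(1) by blast
  moreover have "x \<in> f -` S \<inter> U" using S(2) assms(3) by blast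
  moreover have "\<forall>u\<in>f -` S \<inter> U. P (f u)" using S(3) by blast
  ultimately show ?thesis unfolding eventually_nhds by blast
qed

lemma ev_mem: "open U \<Longrightarrow> a \<in> U \<Longrightarrow> eventually (\<lambda>u. u \<in> U) (nhds a)"
  unfolding eventually_nhds by blast

lemma ev_ne: "(c::real) \<noteq> 0 \<Longrightarrow> eventually (\<lambda>y. y \<noteq> 0) (nhds c)"
  unfolding eventually_nhds by (intro exI[of _ "- {0}"]) auto

lemma surj_near:
  fixes \<mu> :: "real^2 \<Rightarrow> real"
  assumes U: "open U" "p \<in> U" and sm: "smooth_on U \<mu>" and s: "surj (frechet_derivative \<mu> (at p))"
  shows "eventually (\<lambda>u. surj (frechet_derivative \<mu> (at u))) (nhds p)"
proof -
  have lin: "linear (frechet_derivative \<mu> (at u))" if "u \<in> U" for u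
    using smooth_has_deriv[OF sm U(1) that] has_derivative_linear by blast
  obtain h where h: "frechet_derivative \<mu> (at p) h \<noteq> 0" using nz_of_surj[OF s] by blast
  have "frechet_derivative \<mu> (at p) h = h$1 * frechet_derivative \<mu> (at p) (axis 1 1) + h$2 * frechet_derivative \<mu> (at p) (axis 2 1)"
    by (rule lin2r[OF lin[OF U(2)]])
  then obtain e where e: "frechet_derivative \<mu> (at p) e \<noteq> 0" "e = axis 1 1 \<or> e = axis 2 1"
    using h by (metis add.left_neutral mult_zero_right add.right_neutral)
  have ev1: "eventually (\<lambda>u. frechet_derivative \<mu> (at u) e \<noteq> 0) (nhds p)"
    by (rule ev_compose[OF smooth_deriv_cont[OF sm] U ev_ne[OF e(1)]])
  show ?thesis
    using eventually_conj[OF ev1 ev_mem[OF U]] 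
    by (rule eventually_mono) (use surj_of_nz lin in blast)
qed

lemma linear_inner_comp: "linear A \<Longrightarrow> linear (\<lambda>h. w \<bullet> A h)"
proof -
  assume a: "linear A"
  have "linear (\<lambda>y. w \<bullet> y)" using bounded_linear.linear[OF bounded_linear_inner_right] .
  from linear_compose[OF a this] show ?thesis by (simp add: o_def)
qed

lemma wedge_swap: "(m1::real) * a2 - m2 * a1 = 0 \<Longrightarrow> a1 * m2 - a2 * m1 = 0"
  by (simp add: algebra_simps)

lemma rot2_rot2: "rot2 (rot2 n) = - n"
  by (simp add: vec2_eq rot2_comp)

lemma rot2_self: "rot2 n \<bullet> rot2 n = n \<bullet> n"
  by (simp add: inner2 rot2_comp)

lemma line_lemma:
  assumes N: "n \<bullet> n \<noteq> 0" and x: "rot2 n \<bullet> x = 0"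
  shows "x = (n \<bullet> x) *\<^sub>R ((1 / (n \<bullet> n)) *\<^sub>R n)"
proof -
  have "n \<noteq> 0" using N by auto
  then have rn: "rot2 n \<noteq> 0" by (rule rot2_nz)
  obtain t where t: "x = t *\<^sub>R rot2 (rot2 n)" using ker_line[OF rn x] by blast
  then have t': "x = (- t) *\<^sub>R n" by (simp add: rot2_rot2)
  then have "n \<bullet> x = - t * (n \<bullet> n)" by simp
  then show ?thesis using t' N by simp
qed

lemma levelset_fn:
  fixes \<mu> F :: "real^2 \<Rightarrow> real"
  assumes U: "open U" "0 \<in> U" and sm: "smooth_on U \<mu>" and sF: "smooth_on U F"
    and m0: "\<mu> 0 = 0" and F0: "F 0 = 0"
    and ws: "\<And>x. x \<in> U \<Longrightarrow> frechet_derivative \<mu> (at x) (axis 1 1) * frechet_derivative F (at x) (axis 2 1)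
        - frechet_derivative \<mu> (at x) (axis 2 1) * frechet_derivative F (at x) (axis 1 1) = 0"
    and smu: "\<And>x. x \<in> U \<Longrightarrow> surj (frechet_derivative \<mu> (at x))"
    and sF0: "surj (frechet_derivative F (at 0))"
  shows "\<exists>\<kappa>. diffeo_germ 0 0 \<kappa> \<and> eventually (\<lambda>u. \<kappa> (\<mu> u) = F u) (nhds 0)"
proof -
  define e1 where "e1 = (axis 1 1 :: real^2)"
  define e2 where "e2 = (axis 2 1 :: real^2)"
  have e1c: "e1$1 = 1" "e1$2 = 0" and e2c: "e2$1 = 0" "e2$2 = 1" unfolding e1_def e2_def by (simp_all add: axis_def)
  define m0 where "m0 = frechet_derivative \<mu> (at 0)"
  have d\<mu>: "(\<mu> has_derivative frechet_derivative \<mu> (at x)) (at x)" if "x \<in> U" for x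
    using smooth_has_deriv[OF sm U(1) that] .
  have dF: "(F has_derivative frechet_derivative F (at x)) (at x)" if "x \<in> U" for x
    using smooth_has_deriv[OF sF U(1) that] .
  have lm: "linear (frechet_derivative \<mu> (at x))" if "x \<in> U" for x using d\<mu>[OF that] has_derivative_linear by blast
  have lF: "linear (frechet_derivative F (at x))" if "x \<in> U" for x using dF[OF that] has_derivative_linear by blast
  define n where "n = m0 e1 *\<^sub>R e1 + m0 e2 *\<^sub>R e2"
  have n1: "n$1 = m0 e1" "n$2 = m0 e2" unfolding n_def using e1c e2c by simp_all
  have m0n: "m0 h = n \<bullet> h" for h
  proof -
    have "m0 h = h$1 * m0 e1 + h$2 * m0 e2" unfolding m0_def e1_def e2_def by (rule lin2r[OF lm[OF U(2)]])
    then show ?thesis by (simp add: inner2 n1 algebra_simps)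
  qed
  obtain h0 where h0: "m0 h0 \<noteq> 0" using nz_of_surj[OF smu[OF U(2)]] m0_def by blast
  have nnz: "n \<noteq> 0" using h0 m0n by auto
  define N where "N = n \<bullet> n"
  have N: "N \<noteq> 0" using nnz N_def by simp
  define v where "v = (1 / N) *\<^sub>R n"
  have m0v: "m0 v = 1" using m0n N unfolding v_def N_def by simp
  define H where "H = (\<lambda>x. \<mu> x *\<^sub>R e1 + (rot2 n \<bullet> x) *\<^sub>R e2)"
  have smH: "smooth_on U H" unfolding H_def
    by (intro smooth_add[OF U(1)] smooth_scaleR[OF U(1)] sm smooth_const[OF U(1)]
        smooth_bl[OF U(1)] bounded_linear_inner_right)
  have dH: "(H has_derivative (\<lambda>h. frechet_derivative \<mu> (at x) h *\<^sub>R e1 + (rot2 n \<bullet> h) *\<^sub>R e2)) (at x)"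
    if "x \<in> U" for x
  proof -
    have a: "((\<lambda>x. \<mu> x *\<^sub>R e1) has_derivative (\<lambda>h. frechet_derivative \<mu> (at x) h *\<^sub>R e1)) (at x)"
      by (rule has_derivative_scaleR_left[OF d\<mu>[OF that]])
    have b: "((\<lambda>x. rot2 n \<bullet> x) has_derivative (\<lambda>h. rot2 n \<bullet> h)) (at x)"
      by (rule bounded_linear_imp_has_derivative[OF bounded_linear_inner_right])
    show ?thesis unfolding H_def by (rule has_derivative_add[OF a has_derivative_scaleR_left[OF b]])
  qed
  have DH: "frechet_derivative H (at x) = (\<lambda>h. frechet_derivative \<mu> (at x) h *\<^sub>R e1 + (rot2 n \<bullet> h) *\<^sub>R e2)"
    if "x \<in> U" for x using frechet_derivative_at[OF dH[OF that]] by simp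
  have H0: "H 0 = 0" unfolding H_def using m0 by simp
  have Hc1: "(H x)$1 = \<mu> x" and Hc2: "(H x)$2 = rot2 n \<bullet> x" for x unfolding H_def using e1c e2c by simp_all
  have linH0: "linear (frechet_derivative H (at 0))" using dH[OF U(2)] DH[OF U(2)] has_derivative_linear by metis
  have ker0: "h = 0" if "frechet_derivative H (at 0) h = 0" for h
  proof -
    have "m0 h *\<^sub>R e1 + (rot2 n \<bullet> h) *\<^sub>R e2 = 0" using that DH[OF U(2)] m0_def by simp
    then have c: "m0 h = 0" "rot2 n \<bullet> h = 0" by (simp_all add: vec2_eq e1c e2c)
    then have "n \<bullet> h = 0" using m0n by simp
    then obtain t where t: "h = t *\<^sub>R rot2 n" using ker_line[OF nnz] by blast
    then have "t * N = 0" using c(2) by (simp add: rot2_self N_def)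
    then show "h = 0" using t N by simp
  qed
  have inj0: "inj (frechet_derivative H (at 0))"
  proof (rule injI)
    fix x y assume "frechet_derivative H (at 0) x = frechet_derivative H (at 0) y"
    then have "frechet_derivative H (at 0) (x - y) = 0" using linear_diff[OF linH0] by simp
    then have "x - y = 0" by (rule ker0)
    then show "x = y" by simp
  qed
  have bij0: "bij (frechet_derivative H (at 0))"
    using inj0 linear_inj_imp_surj[OF linH0 inj0] bij_def by blast
  obtain U' V G where R: "open U'" "U' \<subseteq> U" "0 \<in> U'" "open V" "H 0 \<in> V"
    "homeomorphism U' V H G"
    "\<And>y. y \<in> V \<Longrightarrow> (G has_derivative inv (frechet_derivative H (at (G y)))) (at y)"
    "\<And>y. y \<in> V \<Longrightarrow> bij (frechet_derivative H (at (G y)))"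
    apply (rule smooth_local_inv[OF U(1) smH U(2) bij0])
    subgoal for U' V G by (rule that[of U' V G])
    done
  have GH: "G (H x) = x" if "x \<in> U'" for x using R(6) that unfolding homeomorphism_def by blast
  have HG: "H (G y) = y" if "y \<in> V" for y using R(6) that unfolding homeomorphism_def by blast
  have GV: "G y \<in> U'" if "y \<in> V" for y using R(6) that unfolding homeomorphism_def by blast
  have contG: "continuous_on V G" and contH: "continuous_on U' H"
    using R(6) unfolding homeomorphism_def by blast+
  have V0: "0 \<in> V" using R(5) H0 by simp
  have G0: "G 0 = 0" using GH[OF R(3)] H0 by simp
  define a where "a = (\<lambda>t::real. \<mu> (t *\<^sub>R v))"
  define b where "b = (\<lambda>t::real. F (t *\<^sub>R v))"
  define Ia where "Ia = (\<lambda>t::real. t *\<^sub>R v) -` U"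
  have oIa: "open Ia"
  proof -
    have "continuous_on UNIV (\<lambda>t::real. t *\<^sub>R v)" by (intro continuous_intros)
    then have "open ((\<lambda>t::real. t *\<^sub>R v) -` U \<inter> UNIV)"
      using continuous_on_open_vimage[OF open_UNIV] U(1) by blast
    then show ?thesis unfolding Ia_def by simp
  qed
  have Ia0: "0 \<in> Ia" unfolding Ia_def using U(2) by simp
  have IaU: "(\<lambda>t::real. t *\<^sub>R v) ` Ia \<subseteq> U" unfolding Ia_def by blast
  have sml: "smooth_on Ia (\<lambda>t::real. t *\<^sub>R v)" by (rule smooth_bl[OF oIa bounded_linear_scaleR_left])
  have sma: "smooth_on Ia a" unfolding a_def by (rule smooth_comp[OF oIa U(1) sml IaU sm])
  have smb: "smooth_on Ia b" unfolding b_def by (rule smooth_comp[OF oIa U(1) sml IaU sF])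
  have dl: "((\<lambda>t::real. t *\<^sub>R v) has_derivative (\<lambda>t. t *\<^sub>R v)) (at 0)"
    by (rule bounded_linear_imp_has_derivative[OF bounded_linear_scaleR_left])
  have dm0: "(\<mu> has_derivative frechet_derivative \<mu> (at 0)) (at ((\<lambda>t::real. t *\<^sub>R v) 0))"
    using d\<mu>[OF U(2)] by simp
  have dF0: "(F has_derivative frechet_derivative F (at 0)) (at ((\<lambda>t::real. t *\<^sub>R v) 0))"
    using dF[OF U(2)] by simp
  have da: "(a has_derivative (\<lambda>t. m0 (t *\<^sub>R v))) (at 0)"
    using diff_chain_at[OF dl dm0] unfolding a_def m0_def by (simp add: o_def)
  have db: "(b has_derivative (\<lambda>t. frechet_derivative F (at 0) (t *\<^sub>R v))) (at 0)"
    using diff_chain_at[OF dl dF0] unfolding b_def by (simp add: o_def)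
  have a1: "frechet_derivative a (at 0) 1 = 1" unfolding frechet_derivative_at[OF da, symmetric] using m0v by simp
  have Fv: "frechet_derivative F (at 0) v \<noteq> 0"
  proof
    assume Fv0: "frechet_derivative F (at 0) v = 0"
    obtain hF where hF: "frechet_derivative F (at 0) hF \<noteq> 0" using nz_of_surj[OF sF0] by blast
    have w0: "frechet_derivative F (at 0) (axis 1 1) * frechet_derivative \<mu> (at 0) (axis 2 1)
        - frechet_derivative F (at 0) (axis 2 1) * frechet_derivative \<mu> (at 0) (axis 1 1) = 0"
      using wedge_swap[OF ws[OF U(2)]] .
    have "frechet_derivative \<mu> (at 0) v = 0" by (rule wedge_ker[OF lF[OF U(2)] lm[OF U(2)] w0 hF Fv0])
    then show False using m0v m0_def by simp
  qed
  have b1: "frechet_derivative b (at 0) 1 \<noteq> 0" unfolding frechet_derivative_at[OF db, symmetric] using Fv by simp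
  have a0: "a 0 = 0" unfolding a_def using m0 by simp
  have b0: "b 0 = 0" unfolding b_def using F0 by simp
  have da1: "diffeo_germ 0 0 a" using diffeo1[OF oIa sma Ia0] a1 a0 by simp
  have db1: "diffeo_germ 0 0 b" using diffeo1[OF oIa smb Ia0] b1 b0 by simp
  obtain Ua where Ua: "open Ua" "0 \<in> Ua" "open (a ` Ua)" "inj_on a Ua" "smooth_on Ua a"
    "smooth_on (a ` Ua) (inv_into Ua a)"
    using da1 unfolding diffeo_germ_def by blast
  have dai: "diffeo_germ 0 0 (inv_into Ua a)" by (rule diffeo_germ_inv[OF da1 Ua])
  define \<kappa> where "\<kappa> = (\<lambda>s. b (inv_into Ua a s))"
  have d\<kappa>: "diffeo_germ 0 0 \<kappa>" unfolding \<kappa>_def by (rule diffeo_germ_comp[OF dai db1])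
  define Wb where "Wb = U' \<inter> ((\<lambda>x. n \<bullet> x) -` Ua)"
  have oWb: "open Wb"
  proof -
    have "continuous_on UNIV (\<lambda>x. n \<bullet> x)" by (intro continuous_intros)
    then have "open ((\<lambda>x. n \<bullet> x) -` Ua \<inter> UNIV)"
      using continuous_on_open_vimage[OF open_UNIV] Ua(1) by blast
    then show ?thesis unfolding Wb_def using R(1) by (simp add: open_Int)
  qed
  define O1 where "O1 = G -` Wb \<inter> V"
  have oO1: "open O1" unfolding O1_def
    using continuous_on_open_vimage[OF R(4), THEN iffD1, OF contG] oWb by blast
  have O10: "0 \<in> O1" unfolding O1_def Wb_def using G0 V0 R(3) Ua(2) by simp
  obtain r where r: "r > 0" "ball 0 r \<subseteq> O1" using oO1 O10 open_contains_ball by blast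
  have Bv: "G y \<in> Wb" "y \<in> V" if "y \<in> ball 0 r" for y using r(2) that unfolding O1_def by blast+
  have K: "F (G y) = F (G (y$1 *\<^sub>R e1))" if y: "y \<in> ball 0 r" for y
  proof -
    define p where "p = (\<lambda>t::real. y$1 *\<^sub>R e1 + t *\<^sub>R e2)"
    define T where "T = {min 0 (y$2) .. max 0 (y$2)}"
    have pc: "(p t)$1 = y$1" "(p t)$2 = t" for t unfolding p_def using e1c e2c by simp_all
    have pB: "p t \<in> ball 0 r" if tT: "t \<in> T" for t
    proof -
      have "norm (p t) \<le> norm y"
      proof (rule norm_le_componentwise_cart)
        fix i :: 2
        show "norm (p t $ i) \<le> norm (y $ i)"
        proof -
          have "i = 1 \<or> i = 2" by (rule exhaust_2)
          then show ?thesis using tT unfolding T_def by (elim disjE) (auto simp: pc)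
        qed
      qed
      then show ?thesis using y by simp
    qed
    have zero: "((\<lambda>t. F (G (p t))) has_derivative (\<lambda>h. 0)) (at t within T)" if t: "t \<in> T" for t
    proof -
      define x where "x = G (p t)"
      have pV: "p t \<in> V" and xW: "x \<in> Wb" using Bv pB[OF t] x_def by auto
      have xU: "x \<in> U" using xW R(2) unfolding Wb_def by blast
      have dp: "(p has_derivative (\<lambda>h. h *\<^sub>R e2)) (at t)"
      proof -
        have "((\<lambda>t. y$1 *\<^sub>R e1 + t *\<^sub>R e2) has_derivative (\<lambda>h. 0 + h *\<^sub>R e2)) (at t)"
          by (intro has_derivative_add has_derivative_const has_derivative_scaleR_left has_derivative_ident)
        then show ?thesis unfolding p_def by simp
      qed
      have dG: "(G has_derivative inv (frechet_derivative H (at x))) (at (p t))"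
        using R(7)[OF pV] x_def by simp
      have ch: "((\<lambda>t. F (G (p t))) has_derivative
          (\<lambda>h. frechet_derivative F (at x) (inv (frechet_derivative H (at x)) (h *\<^sub>R e2)))) (at t)"
      proof -
        have dFx: "(F has_derivative frechet_derivative F (at x)) (at (G (p t)))" using dF[OF xU] x_def by simp
        have dp': "(p has_derivative (\<lambda>h. h *\<^sub>R e2)) (at t)" by (rule dp)
        have dGp: "(G has_derivative inv (frechet_derivative H (at x))) (at (p t))" by (rule dG)
        show ?thesis using diff_chain_at[OF dp' diff_chain_at[OF dGp dFx]] by (simp add: o_def)
      qed
      have z: "frechet_derivative F (at x) (inv (frechet_derivative H (at x)) (h *\<^sub>R e2)) = 0" for h
      proof -
        define w where "w = inv (frechet_derivative H (at x)) (h *\<^sub>R e2)"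
        have sH: "surj (frechet_derivative H (at x))" using R(8)[OF pV] x_def bij_is_surj by simp
        have "frechet_derivative H (at x) w = h *\<^sub>R e2" unfolding w_def by (rule surj_f_inv_f[OF sH])
        then have "frechet_derivative \<mu> (at x) w *\<^sub>R e1 + (rot2 n \<bullet> w) *\<^sub>R e2 = h *\<^sub>R e2"
          using DH[OF xU] by simp
        then have mw: "frechet_derivative \<mu> (at x) w = 0" by (simp add: vec2_eq e1c e2c)
        obtain hm where hm: "frechet_derivative \<mu> (at x) hm \<noteq> 0" using nz_of_surj[OF smu[OF xU]] by blast
        show ?thesis unfolding w_def[symmetric]
          by (rule wedge_ker[OF lm[OF xU] lF[OF xU] ws[OF xU] hm mw])
      qed
      show ?thesis using has_derivative_at_withinI[OF ch] z by simp
    qed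
    have cT: "convex T" unfolding T_def by (rule convex_real_interval(5))
    have "(\<lambda>t. F (G (p t))) (y$2) = (\<lambda>t. F (G (p t))) 0"
      by (rule has_derivative_zero_unique[OF cT zero]) (auto simp: T_def)
    moreover have "p (y$2) = y" unfolding p_def e1_def e2_def using vec2_expand[of y] by simp
    moreover have "p 0 = y$1 *\<^sub>R e1" unfolding p_def by simp
    ultimately show ?thesis by simp
  qed
  have main: "\<kappa> (\<mu> u) = F u" if u: "u \<in> U'" "H u \<in> ball 0 r" for u
  proof -
    define y0 where "y0 = \<mu> u *\<^sub>R e1"
    have "F u = F (G (H u))" using GH[OF u(1)] by simp
    also have "\<dots> = F (G y0)" using K[OF u(2)] Hc1 y0_def by simp
    finally have Fu: "F u = F (G y0)" .
    have n1: "norm ((H u)$1) \<le> norm (H u)" using component_le_norm_cart[of "H u" 1] by simp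
    have "norm y0 = norm ((H u)$1)" unfolding y0_def e1_def Hc1 by simp
    then have "norm y0 \<le> norm (H u)" using n1 by simp
    then have y0B: "y0 \<in> ball 0 r" using u(2) by simp
    define x where "x = G y0"
    have xW: "x \<in> Wb" using Bv[OF y0B] x_def by simp
    have Hx: "H x = y0" using HG Bv(2)[OF y0B] x_def by simp
    have mx: "\<mu> x = \<mu> u" using Hc1[of x] Hx unfolding y0_def using e1c by simp
    have rx: "rot2 n \<bullet> x = 0" using Hc2[of x] Hx unfolding y0_def using e1c by simp
    have xl: "x = (n \<bullet> x) *\<^sub>R v" unfolding v_def N_def by (rule line_lemma[OF N[unfolded N_def] rx])
    have nxU: "n \<bullet> x \<in> Ua" using xW unfolding Wb_def by blast
    have "a (n \<bullet> x) = \<mu> u" unfolding a_def using xl mx by simp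
    then have "inv_into Ua a (\<mu> u) = n \<bullet> x" using inv_into_f_f[OF Ua(4) nxU] by simp
    then have "\<kappa> (\<mu> u) = F x" unfolding \<kappa>_def b_def using xl by simp
    then show ?thesis using Fu x_def by simp
  qed
  have ev: "eventually (\<lambda>u. \<kappa> (\<mu> u) = F u) (nhds 0)"
    unfolding eventually_nhds
  proof (intro exI conjI ballI)
    show "open (H -` ball 0 r \<inter> U')"
      using continuous_on_open_vimage[OF R(1), THEN iffD1, OF contH] by blast
    show "0 \<in> H -` ball 0 r \<inter> U'" using H0 r(1) R(3) by simp
    fix u assume "u \<in> H -` ball 0 r \<inter> U'"
    then show "\<kappa> (\<mu> u) = F u" using main by blast
  qed
  show ?thesis using d\<kappa> ev by blast
qed

lemma dir_back:
  fixes g g' \<omega> \<omega>' :: "real^2 \<Rightarrow> real^2" and \<mu> \<mu>' :: "real^2 \<Rightarrow> real"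
  assumes eg: "equation_germ g \<omega>" and eg': "equation_germ g' \<omega>'"
    and fi: "first_integral \<mu> g \<omega>" and fi': "first_integral \<mu>' g' \<omega>'"
    and m0: "\<mu> 0 = 0" and m0': "\<mu>' 0 = 0" and g0: "g 0 = 0" and g0': "g' 0 = 0"
    and nd: "nowhere_dense_sing g"
    and ide: "integral_diagram_equiv \<mu> g \<mu>' g'"
  shows "point_equivalent g \<omega> g' \<omega>'"
proof -
  obtain \<kappa> \<psi> \<phi> where d\<kappa>: "diffeo_germ (\<mu> 0) (\<mu>' 0) \<kappa>" and d\<psi>: "diffeo_germ 0 0 \<psi>"
    and d\<phi>: "diffeo_germ (g 0) (g' 0) \<phi>"
    and ev: "eventually (\<lambda>u. \<kappa> (\<mu> u) = \<mu>' (\<psi> u) \<and> \<phi> (g u) = g' (\<psi> u)) (nhds 0)"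
    using ide unfolding integral_diagram_equiv_def by blast
  obtain E where E: "open E" "0 \<in> E" "\<forall>u\<in>E. \<kappa> (\<mu> u) = \<mu>' (\<psi> u) \<and> \<phi> (g u) = g' (\<psi> u)"
    using ev unfolding eventually_nhds by blast
  obtain Ug where Ug: "open Ug" "0 \<in> Ug" "smooth_on Ug g" "smooth_on Ug \<omega>" "\<forall>u\<in>Ug. \<omega> u \<noteq> 0"
    using eg unfolding equation_germ_def by blast
  obtain Ug' where Ug': "open Ug'" "0 \<in> Ug'" "smooth_on Ug' g'" "smooth_on Ug' \<omega>'" "\<forall>u\<in>Ug'. \<omega>' u \<noteq> 0"
    using eg' unfolding equation_germ_def by blast
  obtain Um where Um: "open Um" "0 \<in> Um" "smooth_on Um \<mu>"
    using fi unfolding first_integral_def submersion_germ_def smooth_germ_def by blast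
  have wm: "eventually (\<lambda>u. wedge2 (\<lambda>u. frechet_derivative \<mu> (at u)) (pullback_contact g \<omega>) u = 0) (nhds 0)"
    using fi unfolding first_integral_def by blast
  obtain Um' where Um': "open Um'" "0 \<in> Um'" "smooth_on Um' \<mu>'"
    using fi' unfolding first_integral_def submersion_germ_def smooth_germ_def by blast
  have sm': "surj (frechet_derivative \<mu>' (at 0))"
    using fi' unfolding first_integral_def submersion_germ_def by blast
  have wm': "eventually (\<lambda>u. wedge2 (\<lambda>u. frechet_derivative \<mu>' (at u)) (pullback_contact g' \<omega>') u = 0) (nhds 0)"
    using fi' unfolding first_integral_def by blast
  obtain Us where Us: "open Us" "0 \<in> Us" "interior (closure (Us \<inter> sing_set g)) = {}"
    using nd unfolding nowhere_dense_sing_def by blast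
  obtain U\<psi> where U\<psi>: "\<psi> 0 = 0" "open U\<psi>" "0 \<in> U\<psi>" "open (\<psi> ` U\<psi>)" "inj_on \<psi> U\<psi>"
    "smooth_on U\<psi> \<psi>" "smooth_on (\<psi> ` U\<psi>) (inv_into U\<psi> \<psi>)"
    using d\<psi> unfolding diffeo_germ_def by blast
  have d\<phi>0: "diffeo_germ 0 0 \<phi>" using d\<phi> g0 g0' by simp
  obtain U\<phi> where U\<phi>: "\<phi> 0 = 0" "open U\<phi>" "0 \<in> U\<phi>" "open (\<phi> ` U\<phi>)" "inj_on \<phi> U\<phi>"
    "smooth_on U\<phi> \<phi>" "smooth_on (\<phi> ` U\<phi>) (inv_into U\<phi> \<phi>)"
    using d\<phi>0 unfolding diffeo_germ_def by blast
  have d\<kappa>0: "diffeo_germ 0 0 \<kappa>" using d\<kappa> m0 m0' by simp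
  obtain U\<kappa> where U\<kappa>: "\<kappa> 0 = 0" "open U\<kappa>" "0 \<in> U\<kappa>" "smooth_on U\<kappa> \<kappa>"
    using d\<kappa>0 unfolding diffeo_germ_def by blast
  define Q where "Q = (\<lambda>y. y \<in> Ug' \<and> y \<in> Um' \<and> surj (frechet_derivative \<mu>' (at y)) \<and>
     wedge2 (\<lambda>u. frechet_derivative \<mu>' (at u)) (pullback_contact g' \<omega>') y = 0)"
  have evy: "eventually Q (nhds 0)" unfolding Q_def
    by (intro eventually_conj ev_mem Ug' Um' surj_near[OF Um'(1,2,3) sm'] wm')
  have ev1: "eventually (\<lambda>u. Q (\<psi> u)) (nhds 0)"
    using ev_compose[OF smooth_cont[OF U\<psi>(6)] U\<psi>(2,3), of Q] evy U\<psi>(1) by simp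
  have ev2: "eventually (\<lambda>u. g u \<in> U\<phi>) (nhds 0)"
    using ev_compose[OF smooth_cont[OF Ug(3)] Ug(1,2), of "\<lambda>y. y \<in> U\<phi>"] ev_mem[OF U\<phi>(2,3)] g0 by simp
  have ev3: "eventually (\<lambda>u. \<mu> u \<in> U\<kappa>) (nhds 0)"
    using ev_compose[OF smooth_cont[OF Um(3)] Um(1,2), of "\<lambda>y. y \<in> U\<kappa>"] ev_mem[OF U\<kappa>(2,3)] m0 by simp
  define P where "P = (\<lambda>u. Q (\<psi> u) \<and> g u \<in> U\<phi> \<and> \<mu> u \<in> U\<kappa> \<and> u \<in> E \<and> u \<in> Ug \<and> u \<in> Um \<and> u \<in> Us \<and> u \<in> U\<psi>
     \<and> wedge2 (\<lambda>u. frechet_derivative \<mu> (at u)) (pullback_contact g \<omega>) u = 0)"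
  have "eventually P (nhds 0)" unfolding P_def
    by (intro eventually_conj ev1 ev2 ev3 ev_mem E Ug Um Us U\<psi> wm)
  then obtain W where W: "open W" "0 \<in> W" "\<forall>u\<in>W. P u" unfolding eventually_nhds by blast
  have PW: "\<psi> u \<in> Ug'" "\<psi> u \<in> Um'" "surj (frechet_derivative \<mu>' (at (\<psi> u)))"
    "wedge2 (\<lambda>u. frechet_derivative \<mu>' (at u)) (pullback_contact g' \<omega>') (\<psi> u) = 0"
    "g u \<in> U\<phi>" "\<mu> u \<in> U\<kappa>" "u \<in> E" "u \<in> Ug" "u \<in> Um" "u \<in> Us" "u \<in> U\<psi>"
    "wedge2 (\<lambda>u. frechet_derivative \<mu> (at u)) (pullback_contact g \<omega>) u = 0"
    if "u \<in> W" for u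
    using W(3) that unfolding P_def Q_def by blast+
  have WUs: "W \<subseteq> Us" using PW by blast
  define c where "c = (\<lambda>u. \<omega>' (\<psi> u) \<bullet> frechet_derivative \<phi> (at (g u)) (rot2 (\<omega> u)))"
  define c' where "c' = (\<lambda>u. \<omega>' (\<psi> u) \<bullet> ((rot2 (\<omega> u))$1 *\<^sub>R frechet_derivative \<phi> (at (g u)) (axis 1 1)
      + (rot2 (\<omega> u))$2 *\<^sub>R frechet_derivative \<phi> (at (g u)) (axis 2 1)))"
  have lin\<phi>: "linear (frechet_derivative \<phi> (at (g u)))" if "u \<in> W" for u
    using smooth_has_deriv[OF U\<phi>(6,2) PW(5)[OF that]] has_derivative_linear by blast
  have cc': "\<forall>u\<in>W. c' u = c u"
  proof
    fix u assume u: "u \<in> W"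
    show "c' u = c u" unfolding c_def c'_def using lin2[OF lin\<phi>[OF u], of "rot2 (\<omega> u)"] by simp
  qed
  have contc': "continuous_on W c'"
  proof -
    have s1: "W \<subseteq> U\<psi>" using PW(11) by blast
    have s2: "\<psi> ` W \<subseteq> Ug'" using PW(1) by blast
    have s3: "W \<subseteq> Ug" using PW(8) by blast
    have s4: "g ` W \<subseteq> U\<phi>" using PW(5) by blast
    have a: "continuous_on W (\<lambda>u. \<omega>' (\<psi> u))"
      by (rule continuous_on_compose2[OF smooth_cont[OF Ug'(4)] continuous_on_subset[OF smooth_cont[OF U\<psi>(6)] s1] s2])
    have b: "continuous_on W (\<lambda>u. (\<omega> u) $ i)" for i
      by (rule continuous_on_subset[OF smooth_cont[OF smooth_linear_comp[OF Ug(1) bounded_linear_vec_nth Ug(4)]] s3])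
    have c: "continuous_on W (\<lambda>u. frechet_derivative \<phi> (at (g u)) e)" for e
      by (rule continuous_on_compose2[OF smooth_deriv_cont[OF U\<phi>(6)] continuous_on_subset[OF smooth_cont[OF Ug(3)] s3] s4])
    show ?thesis unfolding c'_def rot2_comp
      by (intro continuous_on_inner a continuous_on_add continuous_on_scaleR continuous_on_minus b c)
  qed
  have contc: "continuous_on W c" by (rule continuous_on_eq[OF contc']) (use cc' in simp)
  have reg: "c u = 0" if u: "u \<in> W" and ns: "u \<notin> sing_set g" for u
  proof -
    let ?A = "frechet_derivative g (at u)"
    let ?m = "frechet_derivative \<mu> (at u)"
    let ?P = "frechet_derivative \<psi> (at u)"
    let ?m' = "frechet_derivative \<mu>' (at (\<psi> u))"
    let ?B = "frechet_derivative g' (at (\<psi> u))"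
    let ?F = "frechet_derivative \<phi> (at (g u))"
    let ?K = "frechet_derivative \<kappa> (at (\<mu> u))"
    have dg: "(g has_derivative ?A) (at u)" using smooth_has_deriv[OF Ug(3,1) PW(8)[OF u]] .
    have dm: "(\<mu> has_derivative ?m) (at u)" using smooth_has_deriv[OF Um(3,1) PW(9)[OF u]] .
    have dp: "(\<psi> has_derivative ?P) (at u)" using smooth_has_deriv[OF U\<psi>(6,2) PW(11)[OF u]] .
    have dm': "(\<mu>' has_derivative ?m') (at (\<psi> u))" using smooth_has_deriv[OF Um'(3,1) PW(2)[OF u]] .
    have dg': "(g' has_derivative ?B) (at (\<psi> u))" using smooth_has_deriv[OF Ug'(3,1) PW(1)[OF u]] .
    have df: "(\<phi> has_derivative ?F) (at (g u))" using smooth_has_deriv[OF U\<phi>(6,2) PW(5)[OF u]] .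
    have dk: "(\<kappa> has_derivative ?K) (at (\<mu> u))" using smooth_has_deriv[OF U\<kappa>(4,2) PW(6)[OF u]] .
    have lA: "linear ?A" using dg has_derivative_linear by blast
    have lm: "linear ?m" using dm has_derivative_linear by blast
    have lm': "linear ?m'" using dm' has_derivative_linear by blast
    have lB: "linear ?B" using dg' has_derivative_linear by blast
    have lK: "linear ?K" using dk has_derivative_linear by blast
    have surjA: "surj ?A" using ns unfolding sing_set_def by simp
    obtain k0 where k0: "?A k0 = rot2 (\<omega> u)" using surjA by (metis surjD)
    obtain k1 where k1: "?A k1 = \<omega> u" using surjA by (metis surjD)
    define \<alpha> where "\<alpha> = (\<lambda>h. \<omega> u \<bullet> ?A h)"
    have l\<alpha>: "linear \<alpha>" unfolding \<alpha>_def by (rule linear_inner_comp[OF lA])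
    have \<alpha>nz: "\<alpha> k1 \<noteq> 0" unfolding \<alpha>_def k1 using Ug(5) PW(8)[OF u] by simp
    have wed: "\<alpha> (axis 1 1) * ?m (axis 2 1) - \<alpha> (axis 2 1) * ?m (axis 1 1) = 0"
      using PW(12)[OF u] unfolding wedge2_def pullback_contact_def \<alpha>_def by (rule wedge_swap)
    have "\<alpha> k0 = 0" unfolding \<alpha>_def k0 by (rule rot2_ker)
    then have mk0: "?m k0 = 0" by (rule wedge_ker[OF l\<alpha> lm wed \<alpha>nz])
    have E1: "\<And>x. x \<in> E \<Longrightarrow> \<kappa> (\<mu> x) = \<mu>' (\<psi> x)" using E(3) by blast
    have E2: "\<And>x. x \<in> E \<Longrightarrow> \<phi> (g x) = g' (\<psi> x)" using E(3) by blast
    have "?K (?m k0) = ?m' (?P k0)" by (rule deriv_eq_comp[OF E(1) PW(7)[OF u] E1 dm dk dp dm'])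
    then have m'0: "?m' (?P k0) = 0" using mk0 linear_0[OF lK] by simp
    obtain h' where h': "?m' h' \<noteq> 0" using nz_of_surj[OF PW(3)[OF u]] by blast
    define \<beta> where "\<beta> = (\<lambda>h. \<omega>' (\<psi> u) \<bullet> ?B h)"
    have l\<beta>: "linear \<beta>" unfolding \<beta>_def by (rule linear_inner_comp[OF lB])
    have wed': "?m' (axis 1 1) * \<beta> (axis 2 1) - ?m' (axis 2 1) * \<beta> (axis 1 1) = 0"
      using PW(4)[OF u] unfolding wedge2_def pullback_contact_def \<beta>_def .
    have b0: "\<beta> (?P k0) = 0" by (rule wedge_ker[OF lm' l\<beta> wed' h' m'0])
    have "?F (?A k0) = ?B (?P k0)" by (rule deriv_eq_comp[OF E(1) PW(7)[OF u] E2 dg df dp dg'])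
    then show "c u = 0" using b0 unfolding c_def \<beta>_def k0[symmetric] by simp
  qed
  have c0: "c u = 0" if "u \<in> W" for u
    by (rule density_zero[OF W(1) WUs Us(3) contc reg that])
  show ?thesis unfolding point_equivalent_def
  proof (intro exI conjI)
    show "diffeo_germ (g 0) (g' 0) \<phi>" by (rule d\<phi>)
    show "diffeo_germ 0 0 \<psi>" by (rule d\<psi>)
    show "\<forall>\<^sub>F u in nhds 0. \<phi> (g u) = g' (\<psi> u) \<and>
       frechet_derivative \<phi> (at (g u)) ` {h. \<omega> u \<bullet> h = 0} = {h. \<omega>' (\<psi> u) \<bullet> h = 0}"
      unfolding eventually_nhds
    proof (intro exI conjI ballI)
      show "open W" "0 \<in> W" using W by auto
      fix u assume u: "u \<in> W"
      show "\<phi> (g u) = g' (\<psi> u)" using E(3) PW(7)[OF u] by blast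
      have inj: "inj (frechet_derivative \<phi> (at (g u)))"
        using diffeo_deriv_inj[OF U\<phi>(2,4,5,6,7) PW(5)[OF u]] bij_is_inj by blast
      show "frechet_derivative \<phi> (at (g u)) ` {h. \<omega> u \<bullet> h = 0} = {h. \<omega>' (\<psi> u) \<bullet> h = 0}"
        by (rule kernel_image_eq[OF lin\<phi>[OF u] inj])
          (use Ug(5) PW(8)[OF u] Ug'(5) PW(1)[OF u] c0[OF u] c_def in auto)
    qed
  qed
qed

lemma dir_fwd:
  fixes g g' \<omega> \<omega>' :: "real^2 \<Rightarrow> real^2" and \<mu> \<mu>' :: "real^2 \<Rightarrow> real"
  assumes eg: "equation_germ g \<omega>" and eg': "equation_germ g' \<omega>'"
    and fi: "first_integral \<mu> g \<omega>" and fi': "first_integral \<mu>' g' \<omega>'"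
    and m0: "\<mu> 0 = 0" and m0': "\<mu>' 0 = 0" and g0: "g 0 = 0" and g0': "g' 0 = 0"
    and nd: "nowhere_dense_sing g"
    and pe: "point_equivalent g \<omega> g' \<omega>'"
  shows "integral_diagram_equiv \<mu> g \<mu>' g'"
proof -
  obtain \<phi> \<psi> where d\<phi>: "diffeo_germ (g 0) (g' 0) \<phi>" and d\<psi>: "diffeo_germ 0 0 \<psi>"
    and ev: "eventually (\<lambda>u. \<phi> (g u) = g' (\<psi> u) \<and>
            frechet_derivative \<phi> (at (g u)) ` {h. \<omega> u \<bullet> h = 0} = {h. \<omega>' (\<psi> u) \<bullet> h = 0}) (nhds 0)"
    using pe unfolding point_equivalent_def by blast
  obtain E where E: "open E" "0 \<in> E" "\<forall>u\<in>E. \<phi> (g u) = g' (\<psi> u) \<and>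
            frechet_derivative \<phi> (at (g u)) ` {h. \<omega> u \<bullet> h = 0} = {h. \<omega>' (\<psi> u) \<bullet> h = 0}"
    using ev unfolding eventually_nhds by blast
  obtain Ug where Ug: "open Ug" "0 \<in> Ug" "smooth_on Ug g" "smooth_on Ug \<omega>" "\<forall>u\<in>Ug. \<omega> u \<noteq> 0"
    using eg unfolding equation_germ_def by blast
  obtain Ug' where Ug': "open Ug'" "0 \<in> Ug'" "smooth_on Ug' g'" "smooth_on Ug' \<omega>'" "\<forall>u\<in>Ug'. \<omega>' u \<noteq> 0"
    using eg' unfolding equation_germ_def by blast
  obtain Um where Um: "open Um" "0 \<in> Um" "smooth_on Um \<mu>"
    using fi unfolding first_integral_def submersion_germ_def smooth_germ_def by blast
  have sm: "surj (frechet_derivative \<mu> (at 0))"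
    using fi unfolding first_integral_def submersion_germ_def by blast
  have wm: "eventually (\<lambda>u. wedge2 (\<lambda>u. frechet_derivative \<mu> (at u)) (pullback_contact g \<omega>) u = 0) (nhds 0)"
    using fi unfolding first_integral_def by blast
  obtain Um' where Um': "open Um'" "0 \<in> Um'" "smooth_on Um' \<mu>'"
    using fi' unfolding first_integral_def submersion_germ_def smooth_germ_def by blast
  have sm': "surj (frechet_derivative \<mu>' (at 0))"
    using fi' unfolding first_integral_def submersion_germ_def by blast
  have wm': "eventually (\<lambda>u. wedge2 (\<lambda>u. frechet_derivative \<mu>' (at u)) (pullback_contact g' \<omega>') u = 0) (nhds 0)"
    using fi' unfolding first_integral_def by blast
  obtain Us where Us: "open Us" "0 \<in> Us" "interior (closure (Us \<inter> sing_set g)) = {}"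
    using nd unfolding nowhere_dense_sing_def by blast
  obtain U\<psi> where U\<psi>: "\<psi> 0 = 0" "open U\<psi>" "0 \<in> U\<psi>" "open (\<psi> ` U\<psi>)" "inj_on \<psi> U\<psi>"
    "smooth_on U\<psi> \<psi>" "smooth_on (\<psi> ` U\<psi>) (inv_into U\<psi> \<psi>)"
    using d\<psi> unfolding diffeo_germ_def by blast
  have d\<phi>0: "diffeo_germ 0 0 \<phi>" using d\<phi> g0 g0' by simp
  obtain U\<phi> where U\<phi>: "\<phi> 0 = 0" "open U\<phi>" "0 \<in> U\<phi>" "open (\<phi> ` U\<phi>)" "inj_on \<phi> U\<phi>"
    "smooth_on U\<phi> \<phi>" "smooth_on (\<phi> ` U\<phi>) (inv_into U\<phi> \<phi>)"
    using d\<phi>0 unfolding diffeo_germ_def by blast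
  define UF where "UF = \<psi> -` Um' \<inter> U\<psi>"
  have oUF: "open UF" unfolding UF_def
    using continuous_on_open_vimage[OF U\<psi>(2), THEN iffD1, OF smooth_cont[OF U\<psi>(6)]] Um'(1) by blast
  have UF0: "0 \<in> UF" unfolding UF_def using U\<psi>(1,3) Um'(2) by simp
  define F where "F = (\<lambda>u. \<mu>' (\<psi> u))"
  have smF: "smooth_on UF F" unfolding F_def
    by (rule smooth_comp[OF oUF Um'(1) smooth_on_subset[OF U\<psi>(6) _ oUF] _ Um'(3)]) (auto simp: UF_def)
  define Q where "Q = (\<lambda>y. y \<in> Ug' \<and> y \<in> Um' \<and> surj (frechet_derivative \<mu>' (at y)) \<and>
     wedge2 (\<lambda>u. frechet_derivative \<mu>' (at u)) (pullback_contact g' \<omega>') y = 0)"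
  have evy: "eventually Q (nhds 0)" unfolding Q_def
    by (intro eventually_conj ev_mem Ug' Um' surj_near[OF Um'(1,2,3) sm'] wm')
  have ev1: "eventually (\<lambda>u. Q (\<psi> u)) (nhds 0)"
    using ev_compose[OF smooth_cont[OF U\<psi>(6)] U\<psi>(2,3), of Q] evy U\<psi>(1) by simp
  have ev2: "eventually (\<lambda>u. g u \<in> U\<phi>) (nhds 0)"
    using ev_compose[OF smooth_cont[OF Ug(3)] Ug(1,2), of "\<lambda>y. y \<in> U\<phi>"] ev_mem[OF U\<phi>(2,3)] g0 by simp
  define P where "P = (\<lambda>u. Q (\<psi> u) \<and> g u \<in> U\<phi> \<and> u \<in> E \<and> u \<in> Ug \<and> u \<in> Um \<and> u \<in> Us \<and> u \<in> U\<psi>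
     \<and> u \<in> UF \<and> surj (frechet_derivative \<mu> (at u))
     \<and> wedge2 (\<lambda>u. frechet_derivative \<mu> (at u)) (pullback_contact g \<omega>) u = 0)"
  have "eventually P (nhds 0)" unfolding P_def
    by (intro eventually_conj ev1 ev2 ev_mem E Ug Um Us U\<psi> oUF UF0 surj_near[OF Um(1,2,3) sm] wm)
  then obtain W where W: "open W" "0 \<in> W" "\<forall>u\<in>W. P u" unfolding eventually_nhds by blast
  have PW: "\<psi> u \<in> Ug'" "\<psi> u \<in> Um'" "surj (frechet_derivative \<mu>' (at (\<psi> u)))"
    "wedge2 (\<lambda>u. frechet_derivative \<mu>' (at u)) (pullback_contact g' \<omega>') (\<psi> u) = 0"
    "g u \<in> U\<phi>" "u \<in> E" "u \<in> Ug" "u \<in> Um" "u \<in> Us" "u \<in> U\<psi>" "u \<in> UF"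
    "surj (frechet_derivative \<mu> (at u))"
    "wedge2 (\<lambda>u. frechet_derivative \<mu> (at u)) (pullback_contact g \<omega>) u = 0"
    if "u \<in> W" for u
    using W(3) that unfolding P_def Q_def by blast+
  have WUs: "W \<subseteq> Us" using PW(9) by blast
  have WUm: "W \<subseteq> Um" using PW(8) by blast
  have WUF: "W \<subseteq> UF" using PW(11) by blast
  define c where "c = (\<lambda>u. frechet_derivative \<mu> (at u) (axis 1 1) * frechet_derivative F (at u) (axis 2 1)
        - frechet_derivative \<mu> (at u) (axis 2 1) * frechet_derivative F (at u) (axis 1 1))"
  have contc: "continuous_on W c" unfolding c_def
    by (intro continuous_on_diff continuous_on_mult
        continuous_on_subset[OF smooth_deriv_cont[OF Um(3)] WUm]
        continuous_on_subset[OF smooth_deriv_cont[OF smF] WUF])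
  have reg: "c u = 0" if u: "u \<in> W" and ns: "u \<notin> sing_set g" for u
  proof -
    let ?A = "frechet_derivative g (at u)"
    let ?m = "frechet_derivative \<mu> (at u)"
    let ?P = "frechet_derivative \<psi> (at u)"
    let ?m' = "frechet_derivative \<mu>' (at (\<psi> u))"
    let ?B = "frechet_derivative g' (at (\<psi> u))"
    let ?F = "frechet_derivative \<phi> (at (g u))"
    have dg: "(g has_derivative ?A) (at u)" using smooth_has_deriv[OF Ug(3,1) PW(7)[OF u]] .
    have dm: "(\<mu> has_derivative ?m) (at u)" using smooth_has_deriv[OF Um(3,1) PW(8)[OF u]] .
    have dp: "(\<psi> has_derivative ?P) (at u)" using smooth_has_deriv[OF U\<psi>(6,2) PW(10)[OF u]] .
    have dm': "(\<mu>' has_derivative ?m') (at (\<psi> u))" using smooth_has_deriv[OF Um'(3,1) PW(2)[OF u]] .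
    have dg': "(g' has_derivative ?B) (at (\<psi> u))" using smooth_has_deriv[OF Ug'(3,1) PW(1)[OF u]] .
    have df: "(\<phi> has_derivative ?F) (at (g u))" using smooth_has_deriv[OF U\<phi>(6,2) PW(5)[OF u]] .
    have lA: "linear ?A" using dg has_derivative_linear by blast
    have lm: "linear ?m" using dm has_derivative_linear by blast
    have lm': "linear ?m'" using dm' has_derivative_linear by blast
    have lB: "linear ?B" using dg' has_derivative_linear by blast
    have lP: "linear ?P" using dp has_derivative_linear by blast
    have dFu: "(F has_derivative (\<lambda>h. ?m' (?P h))) (at u)"
      using diff_chain_at[OF dp dm'] unfolding F_def by (simp add: o_def)
    have DFu: "frechet_derivative F (at u) = (\<lambda>h. ?m' (?P h))" using frechet_derivative_at[OF dFu] by simp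
    have lDF: "linear (\<lambda>h. ?m' (?P h))" using dFu has_derivative_linear by blast
    have surjA: "surj ?A" using ns unfolding sing_set_def by simp
    have E2: "\<And>x. x \<in> E \<Longrightarrow> \<phi> (g x) = g' (\<psi> x)" using E(3) by blast
    have chain: "?F (?A k) = ?B (?P k)" for k by (rule deriv_eq_comp[OF E(1) PW(6)[OF u] E2 dg df dp dg'])
    have bijF: "bij ?F" by (rule diffeo_deriv_inj[OF U\<phi>(2,4,5,6,7) PW(5)[OF u]])
    have surjB: "surj ?B" unfolding surj_def
    proof
      fix y
      obtain z where z: "y = ?F z" using bij_is_surj[OF bijF] by (metis surjD)
      obtain k where k: "z = ?A k" using surjA by (metis surjD)
      show "\<exists>x. y = ?B x" using z k chain by (intro exI[of _ "?P k"]) simp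
    qed
    obtain mh where mh: "?m mh \<noteq> 0" using nz_of_surj[OF PW(12)[OF u]] by blast
    define \<alpha> where "\<alpha> = (\<lambda>h. \<omega> u \<bullet> ?A h)"
    have l\<alpha>: "linear \<alpha>" unfolding \<alpha>_def by (rule linear_inner_comp[OF lA])
    have wed: "?m (axis 1 1) * \<alpha> (axis 2 1) - ?m (axis 2 1) * \<alpha> (axis 1 1) = 0"
      using PW(13)[OF u] unfolding wedge2_def pullback_contact_def \<alpha>_def .
    define \<beta> where "\<beta> = (\<lambda>h. \<omega>' (\<psi> u) \<bullet> ?B h)"
    have l\<beta>: "linear \<beta>" unfolding \<beta>_def by (rule linear_inner_comp[OF lB])
    obtain k2 where k2: "?B k2 = \<omega>' (\<psi> u)" using surjB by (metis surjD)
    have \<beta>nz: "\<beta> k2 \<noteq> 0" unfolding \<beta>_def k2 using Ug'(5) PW(1)[OF u] by simp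
    have wed': "\<beta> (axis 1 1) * ?m' (axis 2 1) - \<beta> (axis 2 1) * ?m' (axis 1 1) = 0"
    proof -
      have w4: "?m' (axis 1 1) * \<beta> (axis 2 1) - ?m' (axis 2 1) * \<beta> (axis 1 1) = 0"
        using PW(4)[OF u] unfolding wedge2_def pullback_contact_def \<beta>_def .
      show ?thesis by (rule wedge_swap[OF w4])
    qed
    have ker: "?m' (?P k) = 0" if mk: "?m k = 0" for k
    proof -
      have "\<alpha> k = 0" by (rule wedge_ker[OF lm l\<alpha> wed mh mk])
      then have "?A k \<in> {h. \<omega> u \<bullet> h = 0}" unfolding \<alpha>_def by simp
      then have "?F (?A k) \<in> {h. \<omega>' (\<psi> u) \<bullet> h = 0}" using E(3) PW(6)[OF u] by blast
      then have "\<beta> (?P k) = 0" unfolding \<beta>_def using chain by simp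
      then show ?thesis by (rule wedge_ker[OF l\<beta> lm' wed' \<beta>nz])
    qed
    show "c u = 0" unfolding c_def DFu by (rule ker_wedge[OF lm lDF ker])
  qed
  have c0: "c u = 0" if "u \<in> W" for u
    by (rule density_zero[OF W(1) WUs Us(3) contc reg that])
  have F0: "F 0 = 0" unfolding F_def using U\<psi>(1) m0' by simp
  have sF0: "surj (frechet_derivative F (at 0))"
  proof -
    have dp0: "(\<psi> has_derivative frechet_derivative \<psi> (at 0)) (at 0)" using smooth_has_deriv[OF U\<psi>(6,2,3)] .
    have dm0: "(\<mu>' has_derivative frechet_derivative \<mu>' (at 0)) (at (\<psi> 0))"
      using smooth_has_deriv[OF Um'(3,1,2)] U\<psi>(1) by simp
    have "(F has_derivative (\<lambda>h. frechet_derivative \<mu>' (at 0) (frechet_derivative \<psi> (at 0) h))) (at 0)"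
      using diff_chain_at[OF dp0 dm0] unfolding F_def by (simp add: o_def)
    then have DF0: "frechet_derivative F (at 0) = (\<lambda>h. frechet_derivative \<mu>' (at 0) (frechet_derivative \<psi> (at 0) h))"
      using frechet_derivative_at by metis
    have bp: "bij (frechet_derivative \<psi> (at 0))" by (rule diffeo_deriv_inj[OF U\<psi>(2,4,5,6,7,3)])
    show ?thesis unfolding DF0 surj_def
    proof
      fix t
      obtain z where z: "t = frechet_derivative \<mu>' (at 0) z" using sm' by (metis surjD)
      obtain k where k: "z = frechet_derivative \<psi> (at 0) k" using bij_is_surj[OF bp] by (metis surjD)
      show "\<exists>x. t = frechet_derivative \<mu>' (at 0) (frechet_derivative \<psi> (at 0) x)"
        using z k by (intro exI[of _ k]) simp
    qed
  qed
  obtain \<kappa> where d\<kappa>: "diffeo_germ 0 0 \<kappa>" and ev\<kappa>: "eventually (\<lambda>u. \<kappa> (\<mu> u) = F u) (nhds 0)"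
    using levelset_fn[OF W(1,2) smooth_on_subset[OF Um(3) WUm W(1)] smooth_on_subset[OF smF WUF W(1)] m0 F0
        c0[unfolded c_def] PW(12) sF0] by blast
  show ?thesis unfolding integral_diagram_equiv_def
  proof (intro exI conjI)
    show "diffeo_germ (\<mu> 0) (\<mu>' 0) \<kappa>" using d\<kappa> m0 m0' by simp
    show "diffeo_germ 0 0 \<psi>" by (rule d\<psi>)
    show "diffeo_germ (g 0) (g' 0) \<phi>" by (rule d\<phi>)
    show "\<forall>\<^sub>F u in nhds 0. \<kappa> (\<mu> u) = \<mu>' (\<psi> u) \<and> \<phi> (g u) = g' (\<psi> u)"
      using eventually_conj[OF ev\<kappa> ev] unfolding F_def by (rule eventually_mono) blast
  qed
qed

theorem proposition5:
  fixes g g' \<omega> \<omega>' :: "real^2 \<Rightarrow> real^2" and \<mu> \<mu>' :: "real^2 \<Rightarrow> real"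
  assumes "equation_germ g \<omega>" and "equation_germ g' \<omega>'"
    and "first_integral \<mu> g \<omega>" and "first_integral \<mu>' g' \<omega>'"
    and "\<mu> 0 = 0" and "\<mu>' 0 = 0"
    and "g 0 = 0" and "g' 0 = 0"
    and "nowhere_dense_sing g" and "nowhere_dense_sing g'"
  shows "point_equivalent g \<omega> g' \<omega>' \<longleftrightarrow> integral_diagram_equiv \<mu> g \<mu>' g'"
  using dir_back[OF assms(1-9)] dir_fwd[OF assms(1-9)] by blast

end
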